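(* Let $\Sigma$ be a non-empty finite or countably infinite alphabet and let $\mu$ be a probability map over $\Sigma$ such that there exists at least one $\mu$-distributed sequence $\alpha\in\Sigma^\omega$. Then the following are equivalent: (1) $\mu$ is induced by a positive Bernoulli distribution $p$ on $\Sigma$, i.e. $p(a)>0$ for all $a\in\Sigma$ and $\mu(a_1\cdots a_n)=\prod_{i=1}^n p(a_i)$ for all $a_1,\dots,a_n\in\Sigma$; (2) (Postnikova property) for every $w\in\Sigma^*$ and every $\mu$-distributed $\alpha\in\Sigma^\omega$, if the sequence $\mathcal S_w[\alpha]$ selected from $\alpha$ by the Postnikova strategy $\mathcal S_w=\{vw : v\in\Sigma^*\}$ is infinite, then it is $\mu$-distributed; (3) (Agafonov property) for every DFA $A$ over $\Sigma$ and every $\mu$-distributed $\alpha\in\Sigma^\omega$, if the sequence $A[\alpha]$ selected from $\alpha$ by $A$ is infinite, then it is $\mu$-distributed.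
   Context: $\Sigma^*$, $\Sigma^+$, $\Sigma^\omega$ denote finite, non-empty finite, and right-infinite sequences over $\Sigma$; $\lambda$ is the empty word; for $\alpha=a_1a_2\cdots$, $\alpha|_{\le N}=a_1\cdots a_N$. A probability map over $\Sigma$ is a map $\mu:\Sigma^+\to[0,1]$ such that for every $n\ge1$, $\sum_{w\in\Sigma^n}\mu(w)=1$ (convention $\mu(\lambda)=1$). $\mu$ is induced by a Bernoulli distribution $p:\Sigma\to[0,1]$ (with $\sum_{a\in\Sigma}p(a)=1$) if $\mu(a_1\cdots a_n)=\prod_{i=1}^n p(a_i)$; $p$ is positive if $p(a)>0$ for all $a$. For $v=v_1\cdots v_N$ and $w=w_1\cdots w_n$, $\#_w(v)=|\{j\le N+1-n: v_j\cdots v_{j+n-1}=w\}|$. A sequence $\alpha\in\Sigma^\omega$ is $\mu$-distributed if for every $w\in\Sigma^+$, $\lim_{N\to\infty}\#_w(\alpha|_{\le N})/N$ exists and equals $\mu(w)$. A strategy is a set $S\subseteq\Sigma^*$; the sequence $S[\alpha]$ selected by $S$ from $\alpha=\alpha_1\alpha_2\cdots$ is the (finite or infinite) subsequence consisting of those $\alpha_i$ (in order) with $\alpha_1\cdots\alpha_{i-1}\in S$. A DFA over $\Sigma$ (where $\Sigma$ may be infinite) is $A=(Q,\Sigma,\delta,q_s,F)$ with $Q$ finite, $\delta:Q\times\Sigma\to Q$ total, start state $q_s$, accepting states $F$; $\delta^*$ is the extension to words; $A[\alpha]$ is $S[\alpha]$ for $S=\{u\in\Sigma^*:\delta^*(q_s,u)\in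 F\}$. *)

theory Defs
  imports "HOL-Analysis.Analysis" "HOL-Library.Infinite_Set"
begin

text \<open>The alphabet is a type of class countable (non-empty, finite or countably infinite).
 Finite words are lists; right-infinite sequences are functions nat => 'a, with
 alpha 0 the first letter.\<close>

definition prob_map :: "('a list \<Rightarrow> real) \<Rightarrow> bool" where
  "prob_map \<mu> \<longleftrightarrow> \<mu> [] = 1 \<and>
     (\<forall>w. w \<noteq> [] \<longrightarrow> 0 \<le> \<mu> w \<and> \<mu> w \<le> 1) \<and>
     (\<forall>n\<ge>1. (\<mu> has_sum 1) {w. length w = n})"

definition bernoulli_distr :: "('a \<Rightarrow> real) \<Rightarrow> bool" where
  "bernoulli_distr p \<longleftrightarrow> (\<forall>a. 0 \<le> p a) \<and> (p has_sum 1) UNIV"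

definition induced_by :: "('a list \<Rightarrow> real) \<Rightarrow> ('a \<Rightarrow> real) \<Rightarrow> bool" where
  "induced_by \<mu> p \<longleftrightarrow> (\<forall>w. w \<noteq> [] \<longrightarrow> \<mu> w = prod_list (map p w))"

definition pref :: "(nat \<Rightarrow> 'a) \<Rightarrow> nat \<Rightarrow> 'a list" where
  "pref \<alpha> N = map \<alpha> [0..<N]"

definition occ :: "'a list \<Rightarrow> 'a list \<Rightarrow> nat" where
  "occ w v = card {j. j + length w \<le> length v \<and> take (length w) (drop j v) = w}"

definition mu_distributed :: "('a list \<Rightarrow> real) \<Rightarrow> (nat \<Rightarrow> 'a) \<Rightarrow> bool" where
  "mu_distributed \<mu> \<alpha> \<longleftrightarrow>
     (\<forall>w. w \<noteq> [] \<longrightarrow> (\<lambda>N. real (occ w (pref \<alpha> N)) / real N) \<longlonglongrightarrow> \<mu> w)"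

text \<open>Selection by a strategy S: position i (0-based) is selected iff the prefix of
 length i lies in S.\<close>
definition sel_positions :: "'a list set \<Rightarrow> (nat \<Rightarrow> 'a) \<Rightarrow> nat set" where
  "sel_positions S \<alpha> = {i. pref \<alpha> i \<in> S}"

definition sel_infinite :: "'a list set \<Rightarrow> (nat \<Rightarrow> 'a) \<Rightarrow> bool" where
  "sel_infinite S \<alpha> \<longleftrightarrow> infinite (sel_positions S \<alpha>)"

text \<open>the selected sequence (meaningful when the selection is infinite)\<close>
definition selected :: "'a list set \<Rightarrow> (nat \<Rightarrow> 'a) \<Rightarrow> (nat \<Rightarrow> 'a)" where
  "selected S \<alpha> = (\<lambda>k. \<alpha> (enumerate (sel_positions S \<alpha>) k))"

definition postnikova :: "'a list \<Rightarrow> 'a list set" where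
  "postnikova w = {v @ w | v. True}"

text \<open>DFA with a finite state set Q (states coded as naturals), total transition
 function delta on Q, start state qs, accepting states F.\<close>
definition is_dfa :: "nat set \<Rightarrow> (nat \<Rightarrow> 'a \<Rightarrow> nat) \<Rightarrow> nat \<Rightarrow> nat set \<Rightarrow> bool" where
  "is_dfa Q \<delta> qs F \<longleftrightarrow> finite Q \<and> (\<forall>q\<in>Q. \<forall>a. \<delta> q a \<in> Q) \<and> qs \<in> Q \<and> F \<subseteq> Q"

definition dfa_strategy :: "(nat \<Rightarrow> 'a \<Rightarrow> nat) \<Rightarrow> nat \<Rightarrow> nat set \<Rightarrow> 'a list set" where
  "dfa_strategy \<delta> qs F = {u. foldl \<delta> qs u \<in> F}"

end

theory Submission
  imports Defs "HOL-Probability.Probability"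
begin

definition PM :: "('a \<Rightarrow> real) \<Rightarrow> 'a pmf" where "PM p = embed_pmf p"

fun Wd :: "('a \<Rightarrow> real) \<Rightarrow> nat \<Rightarrow> 'a list pmf" where
  "Wd p 0 = return_pmf []"
| "Wd p (Suc n) = bind_pmf (PM p) (\<lambda>a. map_pmf (Cons a) (Wd p n))"

abbreviation Ew :: "'x pmf \<Rightarrow> ('x \<Rightarrow> real) \<Rightarrow> real" where
  "Ew M f \<equiv> measure_pmf.expectation M f"

lemma ex_bind:
  fixes f :: "'b \<Rightarrow> real"
  assumes "\<And>x. \<bar>f x\<bar> \<le> B"
  shows "Ew (bind_pmf M N) f = Ew M (\<lambda>x. Ew (N x) f)"
  unfolding measure_pmf_bind
  by (rule integral_bind[where B=B and B'=1 and K="count_space UNIV"])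
     (auto simp: assms measure_pmf.emeasure_space_1 measure_pmf.finite_measure measure_pmf_in_subprob_algebra)

lemma bern_nn:
  fixes p :: "'a::countable \<Rightarrow> real"
  assumes "bernoulli_distr p"
  shows "(\<integral>\<^sup>+x. ennreal (p x) \<partial>count_space UNIV) = 1"
proof -
  have nn: "\<And>x. p x \<ge> 0" and hs: "(p has_sum 1) UNIV" using assms unfolding bernoulli_distr_def by auto
  have "p summable_on UNIV" using hs by (auto simp: summable_on_def)
  hence "(\<lambda>x. norm (p x)) summable_on UNIV" using nn by simp
  hence a: "Infinite_Set_Sum.abs_summable_on p UNIV" using abs_summable_equivalent[of p UNIV] by simp
  have "infsetsum p UNIV = infsum p UNIV" by (rule infsetsum_infsum) (use a abs_summable_equivalent in auto)
  also have "\<dots> = 1" using hs by (simp add: infsumI)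
  finally show ?thesis using nn_integral_conv_infsetsum[OF a] nn by simp
qed

lemma pmf_PM:
  fixes p :: "'a::countable \<Rightarrow> real"
  assumes "bernoulli_distr p"
  shows "pmf (PM p) a = p a"
  unfolding PM_def
  by (rule pmf_embed_pmf) (use assms bern_nn in \<open>auto simp: bernoulli_distr_def\<close>)

lemma ex_cong: "(\<And>x. x \<in> set_pmf M \<Longrightarrow> f x = g x) \<Longrightarrow> Ew M f = Ew M g"
  by (intro integral_cong_AE) (auto simp: AE_measure_pmf_iff)

lemma ex_bound:
  fixes f :: "'b \<Rightarrow> real"
  assumes "\<And>x. \<bar>f x\<bar> \<le> B" shows "\<bar>Ew M f\<bar> \<le> B"
proof -
  have i: "integrable (measure_pmf M) f" by (rule measure_pmf.integrable_const_bound[where B=B]) (use assms in auto)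
  have "\<bar>Ew M f\<bar> \<le> Ew M (\<lambda>x. \<bar>f x\<bar>)" by (rule integral_abs_bound)
  also have "\<dots> \<le> Ew M (\<lambda>x. B)" by (rule integral_mono) (use i assms in auto)
  also have "\<dots> = B" by simp
  finally show ?thesis .
qed

lemma ex_const [simp]: "Ew M (\<lambda>x. c) = c" by simp

lemma set_Wd: "x \<in> set_pmf (Wd p n) \<Longrightarrow> length x = n"
  by (induction n arbitrary: x) auto

context
  fixes p :: "'a::countable \<Rightarrow> real"
  assumes bp: "bernoulli_distr p"
begin

lemma ex_Suc:
  assumes "\<And>v. \<bar>f v\<bar> \<le> B"
  shows "Ew (Wd p (Suc n)) f = Ew (PM p) (\<lambda>a. Ew (Wd p n) (\<lambda>v. f (a#v)))"
  by (simp add: ex_bind[where B=B] assms)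

lemma ex_split:
  assumes "\<And>v. \<bar>f v\<bar> \<le> B"
  shows "Ew (Wd p (k+n)) f = Ew (Wd p k) (\<lambda>x. Ew (Wd p n) (\<lambda>y. f (x@y)))"
  using assms
proof (induction k arbitrary: f)
  case 0
  then show ?case by simp
next
  case (Suc k)
  have "Ew (Wd p (Suc k + n)) f = Ew (PM p) (\<lambda>a. Ew (Wd p (k+n)) (\<lambda>v. f (a#v)))"
    using ex_Suc[of f B "k+n"] Suc.prems by simp
  also have "\<dots> = Ew (PM p) (\<lambda>a. Ew (Wd p k) (\<lambda>x. Ew (Wd p n) (\<lambda>y. f (a#x@y))))"
    using Suc.IH[of "\<lambda>v. f (_ # v)"] Suc.prems by simp
  also have "\<dots> = Ew (Wd p (Suc k)) (\<lambda>x. Ew (Wd p n) (\<lambda>y. f (x@y)))"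
    by (subst ex_Suc[where B=B]) (auto intro!: ex_bound Suc.prems)
  finally show ?case .
qed

lemma ex_ind:
  "length u = k \<Longrightarrow> Ew (Wd p k) (\<lambda>v. if v = u then 1 else 0) = prod_list (map p u)"
proof (induction u arbitrary: k)
  case Nil
  then show ?case by simp
next
  case (Cons a u)
  then obtain n where k: "k = Suc n" and n: "length u = n" by auto
  have "Ew (Wd p k) (\<lambda>v. if v = a#u then 1 else 0)
      = Ew (PM p) (\<lambda>b. Ew (Wd p n) (\<lambda>v. if b#v = a#u then 1 else 0))"
    unfolding k by (rule ex_Suc[where B=1]) auto
  also have "\<dots> = Ew (PM p) (\<lambda>b. if b = a then prod_list (map p u) else 0)"
    by (rule Bochner_Integration.integral_cong[OF refl]) (use Cons.IH[OF n] in auto)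
  also have "\<dots> = prod_list (map p u) * pmf (PM p) a"
    by (subst integral_measure_pmf_real[of "{a}"]) (auto split: if_splits)
  also have "\<dots> = prod_list (map p (a#u))" using pmf_PM[OF bp] by simp
  finally show ?case .
qed

lemma ex_take:
  assumes "\<And>v. \<bar>h v\<bar> \<le> B" "T \<le> L"
  shows "Ew (Wd p L) (\<lambda>y. h (take T y)) = Ew (Wd p T) h"
proof -
  have "Ew (Wd p (T + (L-T))) (\<lambda>y. h (take T y)) = Ew (Wd p T) (\<lambda>x. Ew (Wd p (L-T)) (\<lambda>y. h (take T (x@y))))"
    by (rule ex_split[where B=B]) (use assms in auto)
  also have "\<dots> = Ew (Wd p T) h"
    by (rule ex_cong) (auto dest: set_Wd)
  finally show ?thesis using assms by simp
qed

lemma ex_prefix: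
  assumes "length u \<le> L"
  shows "Ew (Wd p L) (\<lambda>v. if take (length u) v = u then 1 else 0) = prod_list (map p u)"
  using ex_take[of "\<lambda>v. if v = u then 1 else 0" 1 "length u" L] ex_ind[of u "length u"] assms by simp

end

lemma bint: "(\<And>x. \<bar>f x\<bar> \<le> B) \<Longrightarrow> integrable (measure_pmf M) (f :: _ \<Rightarrow> real)"
  by (rule measure_pmf.integrable_const_bound[where B=B]) auto

lemma ex_01: "(\<And>x. 0 \<le> f x \<and> f x \<le> 1) \<Longrightarrow> 0 \<le> Ew M f \<and> Ew M f \<le> (1::real)"
  using ex_bound[of f 1 M] by (auto intro!: integral_nonneg_AE)

definition Yf :: "('a \<Rightarrow> real) \<Rightarrow> (nat \<Rightarrow> 'a \<Rightarrow> nat) \<Rightarrow> (nat \<Rightarrow> 'a list \<Rightarrow> real) \<Rightarrow> nat \<Rightarrow> nat \<Rightarrow> nat \<Rightarrow> 'a list \<Rightarrow> real" where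
  "Yf p \<delta> H T r m v = H (foldl \<delta> r (take m v)) (take T (drop m v)) - Ew (Wd p T) (H (foldl \<delta> r (take m v)))"

lemma Yf_bound:
  assumes "\<And>q v. 0 \<le> H q v \<and> H q v \<le> 1"
  shows "\<bar>Yf p \<delta> H T r m v\<bar> \<le> 1"
proof -
  have e: "0 \<le> Ew (Wd p T) (H (foldl \<delta> r (take m v))) \<and> Ew (Wd p T) (H (foldl \<delta> r (take m v))) \<le> 1"
    by (rule ex_01) (simp add: assms)
  show ?thesis using e assms[of "foldl \<delta> r (take m v)" "take T (drop m v)"]
    unfolding Yf_def by (auto simp: abs_le_iff)
qed

context
  fixes p :: "'a::countable \<Rightarrow> real"
  assumes bp: "bernoulli_distr p"
begin

lemma orth:
  assumes H: "\<And>q v. 0 \<le> H q v \<and> H q v \<le> 1"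
    and mm: "m + T \<le> m'" "m' + T \<le> L"
  shows "Ew (Wd p L) (\<lambda>v. Yf p \<delta> H T r m v * Yf p \<delta> H T r m' v) = 0"
proof -
  let ?Y = "Yf p \<delta> H T r"
  have b: "\<bar>?Y m v * ?Y m' v\<bar> \<le> 1" for v
    using Yf_bound[OF H, where p=p and \<delta>=\<delta> and T=T and r=r and m=m and v=v] Yf_bound[OF H, where p=p and \<delta>=\<delta> and T=T and r=r and m=m' and v=v]
    by (simp add: abs_mult mult_le_one)
  have "Ew (Wd p (m' + (L-m'))) (\<lambda>v. ?Y m v * ?Y m' v)
     = Ew (Wd p m') (\<lambda>x. Ew (Wd p (L-m')) (\<lambda>y. ?Y m (x@y) * ?Y m' (x@y)))"
    by (rule ex_split[OF bp, where B=1]) (use b in auto)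
  also have "\<dots> = Ew (Wd p m') (\<lambda>x. 0)"
  proof (rule ex_cong)
    fix x assume "x \<in> set_pmf (Wd p m')"
    hence lx: "length x = m'" by (rule set_Wd)
    define q where "q = foldl \<delta> r x"
    have 1: "?Y m (x@y) = ?Y m x" for y
    proof -
      have a: "take m (x@y) = take m x" using lx mm by simp
      have b: "take T (drop m (x@y)) = take T (drop m x)" using lx mm by simp
      show ?thesis unfolding Yf_def a b ..
    qed
    have 2: "?Y m' (x@y) = H q (take T y) - Ew (Wd p T) (H q)" for y
      unfolding Yf_def q_def using lx by simp
    have "Ew (Wd p (L-m')) (\<lambda>y. ?Y m (x@y) * ?Y m' (x@y))
       = Ew (Wd p (L-m')) (\<lambda>y. ?Y m x * H q (take T y) - ?Y m x * Ew (Wd p T) (H q))"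
      unfolding 1 2 by (simp add: algebra_simps)
    also have "\<dots> = ?Y m x * Ew (Wd p (L-m')) (\<lambda>y. H q (take T y)) - ?Y m x * Ew (Wd p T) (H q)"
      by (subst Bochner_Integration.integral_diff) (auto intro!: bint[where B=1] simp: H abs_le_iff abs_mult)
    also have "Ew (Wd p (L-m')) (\<lambda>y. H q (take T y)) = Ew (Wd p T) (H q)"
      by (rule ex_take[OF bp, where B=1]) (use H mm in \<open>auto simp: abs_le_iff\<close>)
    finally show "Ew (Wd p (L-m')) (\<lambda>y. ?Y m (x@y) * ?Y m' (x@y)) = 0" by simp
  qed
  finally show ?thesis using mm by simp
qed

lemma var_sum:
  assumes H: "\<And>q v. 0 \<le> H q v \<and> H q v \<le> 1"
  shows "Ew (Wd p (M+T)) (\<lambda>v. (\<Sum>m<M. Yf p \<delta> H T r m v)^2) \<le> real M * (2*T+1)"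
proof -
  let ?Y = "Yf p \<delta> H T r"
  have b: "\<bar>?Y m v * ?Y m' v\<bar> \<le> 1" for v m m'
    using Yf_bound[OF H, where p=p and \<delta>=\<delta> and T=T and r=r and m=m and v=v] Yf_bound[OF H, where p=p and \<delta>=\<delta> and T=T and r=r and m=m' and v=v]
    by (simp add: abs_mult mult_le_one)
  have "Ew (Wd p (M+T)) (\<lambda>v. (\<Sum>m<M. ?Y m v)^2) = Ew (Wd p (M+T)) (\<lambda>v. \<Sum>m<M. \<Sum>m'<M. ?Y m v * ?Y m' v)"
    by (simp add: power2_eq_square sum_product)
  also have "\<dots> = (\<Sum>m<M. \<Sum>m'<M. Ew (Wd p (M+T)) (\<lambda>v. ?Y m v * ?Y m' v))"
    by (subst Bochner_Integration.integral_sum, rule Bochner_Integration.integrable_sum, rule bint[OF b])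
       (subst Bochner_Integration.integral_sum, auto intro: bint[OF b])
  also have "\<dots> \<le> (\<Sum>m<M. \<Sum>m'<M. (if m + T \<le> m' \<or> m' + T \<le> m then 0 else 1))"
  proof (intro sum_mono)
    fix m m' assume "m \<in> {..<M}" "m' \<in> {..<M}"
    show "Ew (Wd p (M+T)) (\<lambda>v. ?Y m v * ?Y m' v) \<le> (if m + T \<le> m' \<or> m' + T \<le> m then 0 else 1)"
    proof (cases "m + T \<le> m' \<or> m' + T \<le> m")
      case True
      then show ?thesis
      proof
        assume "m + T \<le> m'" thus ?thesis using orth[OF H, where m=m and T=T and m'=m' and L="M+T" and \<delta>=\<delta> and r=r] \<open>m' \<in> {..<M}\<close> by simp
      next
        assume "m' + T \<le> m" thus ?thesis using orth[OF H, where m=m' and T=T and m'=m and L="M+T" and \<delta>=\<delta> and r=r] \<open>m \<in> {..<M}\<close>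
          by (simp add: mult.commute)
      qed
    next
      case False
      then show ?thesis using ex_bound[of "\<lambda>v. ?Y m v * ?Y m' v" 1 "Wd p (M+T)", OF b] by simp
    qed
  qed
  also have "\<dots> \<le> (\<Sum>m<M. real (2*T+1))"
  proof (intro sum_mono)
    fix m
    have "(\<Sum>m'<M. (if m + T \<le> m' \<or> m' + T \<le> m then 0 else 1::real))
        = real (card {m'\<in>{..<M}. \<not> (m + T \<le> m' \<or> m' + T \<le> m)})"
      by (simp add: sum.If_cases Int_def Compl_eq)
    also have "card {m'\<in>{..<M}. \<not> (m + T \<le> m' \<or> m' + T \<le> m)} \<le> card {m-T..m+T}"
      by (rule card_mono) auto
    also have "card {m-T..m+T} \<le> 2*T+1" by simp
    finally show "(\<Sum>m'<M. (if m + T \<le> m' \<or> m' + T \<le> m then 0 else 1::real)) \<le> real (2*T+1)" by simp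
  qed
  also have "\<dots> = real M * (2*T+1)" by simp
  finally show ?thesis .
qed

end

lemma abs_sqrt:
  fixes g :: "_ \<Rightarrow> real"
  assumes "\<And>x. \<bar>g x\<bar> \<le> B"
  shows "Ew M (\<lambda>x. \<bar>g x\<bar>) \<le> sqrt (Ew M (\<lambda>x. (g x)^2))"
proof -
  define c where "c = Ew M (\<lambda>x. \<bar>g x\<bar>)"
  have c0: "c \<ge> 0" unfolding c_def by (rule integral_nonneg_AE) auto
  have B: "0 \<le> B" using assms[of undefined] by linarith
  have gg: "\<bar>(g x)^2\<bar> \<le> B*B" for x
  proof -
    have "\<bar>g x\<bar> * \<bar>g x\<bar> \<le> B*B" by (rule mult_mono) (use assms B in auto)
    thus ?thesis by (simp add: power2_eq_square abs_mult)
  qed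
  have i1: "integrable M (\<lambda>x. (g x)^2)" by (rule bint[OF gg])
  have i2: "integrable M (\<lambda>x. \<bar>g x\<bar>)" by (rule bint[where B=B]) (use assms in auto)
  have "0 \<le> Ew M (\<lambda>x. (\<bar>g x\<bar> - c)^2)" by (rule integral_nonneg_AE) auto
  also have "\<dots> = Ew M (\<lambda>x. (g x)^2 - 2*c*\<bar>g x\<bar> + c^2)"
    by (intro Bochner_Integration.integral_cong refl) (simp add: power2_eq_square algebra_simps)
  also have "\<dots> = Ew M (\<lambda>x. (g x)^2) - 2*c*c + c^2"
    using i1 i2 by (simp add: c_def)
  finally have "c^2 \<le> Ew M (\<lambda>x. (g x)^2)" by (simp add: power2_eq_square)
  thus ?thesis unfolding c_def[symmetric] using c0 by (simp add: real_le_rsqrt)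
qed


definition win :: "(nat \<Rightarrow> 'a) \<Rightarrow> nat \<Rightarrow> nat \<Rightarrow> 'a list" where
  "win \<alpha> i L = map \<alpha> [i..<i+L]"

lemma length_win[simp]: "length (win \<alpha> i L) = L" by (simp add: win_def)

lemma length_pref[simp]: "length (pref \<alpha> N) = N" by (simp add: pref_def)

lemma pref_add: "pref \<alpha> (i+m) = pref \<alpha> i @ win \<alpha> i m"
  by (simp add: pref_def win_def upt_add_eq_append[of 0 i])

lemma take_win: "m \<le> L \<Longrightarrow> take m (win \<alpha> j L) = win \<alpha> j m"
  by (simp add: win_def take_map)

lemma take_drop_win: "m + T \<le> L \<Longrightarrow> take T (drop m (win \<alpha> j L)) = win \<alpha> (j+m) T"
  by (simp add: win_def take_map drop_map add.assoc)

lemma occ_win: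
  assumes "length w = L" "L \<ge> 1"
  shows "occ w (pref \<alpha> (N + (L - 1))) = card {j. j < N \<and> win \<alpha> j L = w}"
proof -
  have "take L (drop j (pref \<alpha> (N + (L - 1)))) = win \<alpha> j L" if "j < N" for j
    using that assms by (simp add: pref_def win_def take_map drop_map)
  note * = this
  have e: "\<And>j. (j + L \<le> N + (L - 1)) = (j < N)" using assms(2) by arith
  have "{j. j + L \<le> N + (L - 1) \<and> take L (drop j (pref \<alpha> (N + (L - 1)))) = w} = {j. j < N \<and> win \<alpha> j L = w}"
  proof (rule Collect_cong)
    fix j show "(j + L \<le> N + (L - 1) \<and> take L (drop j (pref \<alpha> (N + (L - 1)))) = w) = (j < N \<and> win \<alpha> j L = w)"
      by (cases "j < N") (simp_all only: e * simp_thms)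
  qed
  thus ?thesis unfolding occ_def assms(1) length_pref by simp
qed

lemma lim_shift:
  fixes g :: "nat \<Rightarrow> real"
  assumes "(\<lambda>N. g N / real N) \<longlonglongrightarrow> x"
  shows "(\<lambda>N. g (N + k) / real N) \<longlonglongrightarrow> x"
proof -
  have a: "(\<lambda>N. g (N + k) / real (N + k)) \<longlonglongrightarrow> x"
    using LIMSEQ_ignore_initial_segment[OF assms, of k] by simp
  have b0: "(\<lambda>N. 1 + real k / real N) \<longlonglongrightarrow> 1 + 0"
    by (intro tendsto_add tendsto_const tendsto_divide_0[OF tendsto_const] filterlim_at_top_imp_at_infinity[OF filterlim_real_sequentially])
  have b1: "eventually (\<lambda>N. 1 + real k / real N = real (N + k) / real N) sequentially"
    using eventually_gt_at_top[of 0] by eventually_elim (simp add: field_simps)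
  have b: "(\<lambda>N. real (N + k) / real N) \<longlonglongrightarrow> 1" using Lim_transform_eventually[OF b0 b1] by simp
  have c: "(\<lambda>N. g (N + k) / real (N + k) * (real (N + k) / real N)) \<longlonglongrightarrow> x"
    using tendsto_mult[OF a b] by simp
  have d: "eventually (\<lambda>N. g (N + k) / real (N + k) * (real (N + k) / real N) = g (N + k) / real N) sequentially"
    using eventually_gt_at_top[of 0] by eventually_elim simp
  show ?thesis by (rule Lim_transform_eventually[OF c d])
qed

context
  fixes p :: "'a::countable \<Rightarrow> real"
  assumes bp: "bernoulli_distr p"
begin

lemma ex_ge_finite:
  assumes S: "finite S" "\<And>w. w \<in> S \<Longrightarrow> length w = L" and Z: "\<And>v. 0 \<le> Z v \<and> Z v \<le> B"
  shows "(\<Sum>w\<in>S. Z w * prod_list (map p w)) \<le> Ew (Wd p L) Z"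
proof -
  have "Ew (Wd p L) (\<lambda>v. if v \<in> S then Z v else 0) = Ew (Wd p L) (\<lambda>v. \<Sum>w\<in>S. Z w * (if v = w then 1 else 0))"
    by (intro Bochner_Integration.integral_cong refl) (simp add: S(1) if_distrib sum.delta' cong: if_cong)
  also have "\<dots> = (\<Sum>w\<in>S. Z w * Ew (Wd p L) (\<lambda>v. if v = w then 1 else 0))"
  proof -
    have i: "integrable (measure_pmf (Wd p L)) (\<lambda>v. Z w * (if v = w then 1 else 0))" for w
      by (rule bint[where B="\<bar>Z w\<bar>"]) auto
    show ?thesis by (subst Bochner_Integration.integral_sum) (use i in auto)
  qed
  also have "\<dots> = (\<Sum>w\<in>S. Z w * prod_list (map p w))"
    by (intro sum.cong refl) (use ex_ind[OF bp] S(2) in force)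
  finally have 1: "Ew (Wd p L) (\<lambda>v. if v \<in> S then Z v else 0) = (\<Sum>w\<in>S. Z w * prod_list (map p w))" .
  have "Ew (Wd p L) (\<lambda>v. if v \<in> S then Z v else 0) \<le> Ew (Wd p L) Z"
  proof -
    have B0: "0 \<le> B" using Z[of undefined] by linarith
    show ?thesis using B0 by (intro integral_mono) (auto intro!: bint[where B=B] simp: Z abs_le_iff)
  qed
  thus ?thesis using 1 by simp
qed

lemma window_lemma:
  assumes hs: "((\<lambda>w. prod_list (map p w)) has_sum 1) {w. length w = L}"
    and al: "\<And>w. length w = L \<Longrightarrow> (\<lambda>N. real (occ w (pref \<alpha> N)) / real N) \<longlonglongrightarrow> prod_list (map p w)"
    and L: "L \<ge> 1" and Z: "\<And>v. 0 \<le> Z v \<and> Z v \<le> B" and e: "\<epsilon> > 0"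
  shows "eventually (\<lambda>N. (\<Sum>j<N. Z (win \<alpha> j L)) / real N \<le> Ew (Wd p L) Z + \<epsilon>) sequentially"
proof -
  define f where "f w = prod_list (map p w)" for w :: "'a list"
  have B: "B \<ge> 0" using Z[of undefined] by linarith
  define cnt where "cnt N w = (\<Sum>j<N. if win \<alpha> j L = w then 1 else 0::real)" for N w
  have cnt_lim: "(\<lambda>N. cnt N w / real N) \<longlonglongrightarrow> f w" if "length w = L" for w
  proof -
    have "cnt N w = real (occ w (pref \<alpha> (N + (L - 1))))" for N
      unfolding cnt_def occ_win[OF that L] by (simp add: sum.If_cases Int_def)
    thus ?thesis using lim_shift[OF al[OF that], of "L - 1"] unfolding f_def by simp
  qed
  define \<eta> where "\<eta> = \<epsilon> / (2 * (B + 1))"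
  have \<eta>: "\<eta> > 0" unfolding \<eta>_def using e B by simp
  have "eventually (\<lambda>X. sum f X > 1 - \<eta>) (finite_subsets_at_top {w. length w = L})"
    using hs \<eta> unfolding has_sum_def f_def by (intro order_tendstoD) auto
  then obtain S where S: "finite S" "S \<subseteq> {w. length w = L}" "sum f S > 1 - \<eta>"
    unfolding eventually_finite_subsets_at_top by blast
  define R where "R N = (\<Sum>w\<in>S. Z w * cnt N w) + B * (real N - (\<Sum>w\<in>S. cnt N w))" for N
  have le: "(\<Sum>j<N. Z (win \<alpha> j L)) \<le> R N" for N
  proof -
    have ag: "(\<Sum>j<N. if win \<alpha> j L \<in> S then g (win \<alpha> j L) else 0) = (\<Sum>w\<in>S. g w * cnt N w)" for g
    proof -
      have "(\<Sum>j<N. if win \<alpha> j L \<in> S then g (win \<alpha> j L) else 0) = (\<Sum>j<N. \<Sum>w\<in>S. g w * (if win \<alpha> j L = w then 1 else 0))"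
        by (intro sum.cong refl) (simp add: S(1) if_distrib sum.delta cong: if_cong)
      also have "\<dots> = (\<Sum>w\<in>S. g w * cnt N w)"
        unfolding cnt_def by (subst sum.swap) (simp add: sum_distrib_left)
      finally show ?thesis .
    qed
    have a: "(\<Sum>j<N. if win \<alpha> j L \<in> S then Z (win \<alpha> j L) else 0) = (\<Sum>w\<in>S. Z w * cnt N w)"
      by (rule ag)
    have b: "(\<Sum>j<N. if win \<alpha> j L \<in> S then 1 else 0) = (\<Sum>w\<in>S. cnt N w)"
      using ag[of "\<lambda>_. 1"] by simp
    have "(\<Sum>j<N. Z (win \<alpha> j L)) = (\<Sum>j<N. if win \<alpha> j L \<in> S then Z (win \<alpha> j L) else 0) + (\<Sum>j<N. if win \<alpha> j L \<in> S then 0 else Z (win \<alpha> j L))"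
      by (subst sum.distrib[symmetric]) (intro sum.cong refl, simp)
    also have "(\<Sum>j<N. if win \<alpha> j L \<in> S then 0 else Z (win \<alpha> j L)) \<le> (\<Sum>j<N. if win \<alpha> j L \<in> S then 0 else B)"
      by (intro sum_mono) (simp add: Z)
    also have "(\<Sum>j<N. if win \<alpha> j L \<in> S then 0 else B) = B * (real N - (\<Sum>j<N. if win \<alpha> j L \<in> S then 1 else 0))"
    proof -
      have "(\<Sum>j<N. if win \<alpha> j L \<in> S then 0 else B) = (\<Sum>j<N. B * (1 - (if win \<alpha> j L \<in> S then 1 else 0)))"
        by (intro sum.cong refl) simp
      also have "\<dots> = B * (real N - (\<Sum>j<N. if win \<alpha> j L \<in> S then 1 else 0))"
        by (simp add: sum_distrib_left[symmetric] sum_subtractf)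
      finally show ?thesis .
    qed
    finally show ?thesis unfolding R_def a b by simp
  qed
  define X where "X = (\<Sum>w\<in>S. Z w * f w) + B * (1 - sum f S)"
  have RX: "(\<lambda>N. R N / real N) \<longlonglongrightarrow> X"
  proof -
    have c: "\<And>w. w \<in> S \<Longrightarrow> (\<lambda>N. cnt N w / real N) \<longlonglongrightarrow> f w" using cnt_lim S(2) by auto
    have "(\<lambda>N. (\<Sum>w\<in>S. Z w * (cnt N w / real N)) + B * (1 - (\<Sum>w\<in>S. cnt N w / real N))) \<longlonglongrightarrow> X"
      unfolding X_def by (intro tendsto_intros c) 
    moreover have "eventually (\<lambda>N. (\<Sum>w\<in>S. Z w * (cnt N w / real N)) + B * (1 - (\<Sum>w\<in>S. cnt N w / real N)) = R N / real N) sequentially"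
      using eventually_gt_at_top[of 0]
      by eventually_elim (simp add: R_def field_simps sum_divide_distrib[symmetric] sum_distrib_left)
    ultimately show ?thesis by (rule Lim_transform_eventually)
  qed
  have g: "(\<Sum>w\<in>S. Z w * f w) \<le> Ew (Wd p L) Z"
    unfolding f_def by (rule ex_ge_finite[where Z=Z and L=L and B=B and S=S]) (use S(1,2) Z in auto)
  have "B * (1 - sum f S) \<le> B * \<eta>" using S(3) B by (intro mult_left_mono) auto
  hence "X \<le> Ew (Wd p L) Z + B * \<eta>"
    using g unfolding X_def by linarith
  also have "B * \<eta> < \<epsilon>"
  proof -
    have "0 < B*\<epsilon> + \<epsilon>*2" using e B by (simp add: add_nonneg_pos)
    thus ?thesis unfolding \<eta>_def using e B by (simp add: field_simps)
  qed
  finally have "X < Ew (Wd p L) Z + \<epsilon>" by simp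
  hence "eventually (\<lambda>N. R N / real N < Ew (Wd p L) Z + \<epsilon>) sequentially"
    by (rule order_tendstoD[OF RX])
  thus ?thesis using eventually_gt_at_top[of 0]
  proof eventually_elim
    case (elim N)
    have "(\<Sum>j<N. Z (win \<alpha> j L)) / real N \<le> R N / real N"
      using le[of N] elim by (simp add: divide_right_mono)
    thus ?case using elim by simp
  qed
qed

end


lemma sum_split_add: "(\<Sum>i<a+b. f i) = (\<Sum>i<a. f i) + (\<Sum>j<b. f (a+j::nat))"
  by (induction b) (simp_all add: add.assoc)

lemma sum_abs_le:
  fixes f :: "'b \<Rightarrow> real"
  assumes "\<And>i. i \<in> A \<Longrightarrow> \<bar>f i\<bar> \<le> c"
  shows "\<bar>sum f A\<bar> \<le> real (card A) * c"
proof -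
  have "\<bar>sum f A\<bar> \<le> (\<Sum>i\<in>A. \<bar>f i\<bar>)" by (rule sum_abs)
  also have "\<dots> \<le> (\<Sum>i\<in>A. c)" by (rule sum_mono) (rule assms)
  finally show ?thesis by simp
qed

lemma shift_diff:
  fixes X :: "nat \<Rightarrow> real"
  assumes "\<And>i. \<bar>X i\<bar> \<le> 1"
  shows "\<bar>(\<Sum>j<N. X (j+m)) - (\<Sum>i<N. X i)\<bar> \<le> 2 * m"
proof -
  have 1: "(\<Sum>i<m+N. X i) = (\<Sum>i<m. X i) + (\<Sum>j<N. X (j+m))" using sum_split_add[of X m N] by (simp add: add.commute)
  have 2: "(\<Sum>i<N+m. X i) = (\<Sum>i<N. X i) + (\<Sum>j<m. X (N+j))" using sum_split_add[of X N m] .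
  have "\<bar>(\<Sum>j<m. X (N+j))\<bar> \<le> m" using sum_abs_le[of "{..<m}" "\<lambda>j. X (N+j)" 1] assms by simp
  moreover have "\<bar>(\<Sum>i<m. X i)\<bar> \<le> m" using sum_abs_le[of "{..<m}" X 1] assms by simp
  ultimately show ?thesis using 1 2 by (simp add: add.commute)
qed

definition st :: "(nat \<Rightarrow> 'a \<Rightarrow> nat) \<Rightarrow> nat \<Rightarrow> (nat \<Rightarrow> 'a) \<Rightarrow> nat \<Rightarrow> nat" where
  "st \<delta> qs \<alpha> i = foldl \<delta> qs (pref \<alpha> i)"

lemma st_add: "st \<delta> qs \<alpha> (i+m) = foldl \<delta> (st \<delta> qs \<alpha> i) (win \<alpha> i m)"
  by (simp add: st_def pref_add)

lemma foldl_in: "q \<in> Q \<Longrightarrow> (\<forall>q\<in>Q. \<forall>a. \<delta> q a \<in> Q) \<Longrightarrow> foldl \<delta> q u \<in> Q"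
  by (induction u arbitrary: q) auto

context
  fixes p :: "'a::countable \<Rightarrow> real"
  assumes bp: "bernoulli_distr p"
begin

lemma key_lemma:
  assumes hs: "\<And>L. L \<ge> 1 \<Longrightarrow> ((\<lambda>w. prod_list (map p w)) has_sum 1) {w. length w = L}"
    and al: "\<And>w. w \<noteq> [] \<Longrightarrow> (\<lambda>N. real (occ w (pref \<alpha> N)) / real N) \<longlonglongrightarrow> prod_list (map p w)"
    and Q: "finite Q" "\<forall>q\<in>Q. \<forall>a. \<delta> q a \<in> Q" "qs \<in> Q"
    and H: "\<And>q v. 0 \<le> H q v \<and> H q v \<le> 1"
  shows "(\<lambda>N. (\<Sum>i<N. H (st \<delta> qs \<alpha> i) (win \<alpha> i T) - Ew (Wd p T) (H (st \<delta> qs \<alpha> i))) / real N) \<longlonglongrightarrow> 0"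
proof (rule tendstoI)
  fix \<epsilon> :: real assume e: "\<epsilon> > 0"
  define s where "s = st \<delta> qs \<alpha>"
  define X where "X i = H (s i) (win \<alpha> i T) - Ew (Wd p T) (H (s i))" for i
  have sQ: "s i \<in> Q" for i unfolding s_def st_def by (rule foldl_in[OF Q(3) Q(2)])
  have X1: "\<bar>X i\<bar> \<le> 1" for i
  proof -
    have "0 \<le> Ew (Wd p T) (H (s i)) \<and> Ew (Wd p T) (H (s i)) \<le> 1" by (rule ex_01) (use H in auto)
    thus ?thesis using H[of "s i" "win \<alpha> i T"] unfolding X_def by (auto simp: abs_le_iff)
  qed
  define \<kappa> where "\<kappa> = \<epsilon> / (3 * (real (card Q) + 1))"
  have \<kappa>: "\<kappa> > 0" unfolding \<kappa>_def using e by simp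
  obtain M :: nat where M: "real M > (2*T+1) / \<kappa>^2" using reals_Archimedean2 by blast
  have "0 < (2*T+1) / \<kappa>^2" using \<kappa> by simp
  hence M1: "M \<ge> 1" using M by (cases M) auto
  define L where "L = M + T"
  have L1: "L \<ge> 1" using M1 unfolding L_def by simp
  define G where "G r v = (\<Sum>m<M. Yf p \<delta> H T r m v) / real M" for r v
  define Z where "Z v = (\<Sum>r\<in>Q. \<bar>G r v\<bar>)" for v
  have G1: "\<bar>G r v\<bar> \<le> 1" for r v
  proof -
    have "\<bar>\<Sum>m<M. Yf p \<delta> H T r m v\<bar> \<le> real (card {..<M}) * 1"
      by (rule sum_abs_le) (rule Yf_bound[OF H])
    hence "\<bar>\<Sum>m<M. Yf p \<delta> H T r m v\<bar> \<le> real M" by simp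
    hence "\<bar>\<Sum>m<M. Yf p \<delta> H T r m v\<bar> / real M \<le> 1" using M1 by (simp add: divide_le_eq_1)
    thus ?thesis unfolding G_def by (simp only: abs_divide abs_of_nat)
  qed
  have Zb: "0 \<le> Z v \<and> Z v \<le> real (card Q)" for v
    unfolding Z_def using sum_mono[of Q "\<lambda>r. \<bar>G r v\<bar>" "\<lambda>_. 1"] G1 by (auto intro: sum_nonneg)
  have EG: "Ew (Wd p L) (\<lambda>v. \<bar>G r v\<bar>) \<le> \<kappa>" for r
  proof -
    have "Ew (Wd p L) (\<lambda>v. \<bar>G r v\<bar>) \<le> sqrt (Ew (Wd p L) (\<lambda>v. (G r v)^2))"
      by (rule abs_sqrt[OF G1])
    also have "Ew (Wd p L) (\<lambda>v. (G r v)^2) = Ew (Wd p L) (\<lambda>v. (\<Sum>m<M. Yf p \<delta> H T r m v)^2) / (real M)^2"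
      unfolding G_def by (simp add: power_divide)
    also have "\<dots> \<le> (real M * (2*T+1)) / (real M)^2"
      unfolding L_def by (intro divide_right_mono var_sum[OF bp H]) simp
    also have "\<dots> = (2*T+1) / real M" using M1 by (simp add: power2_eq_square)
    also have "sqrt ((2*T+1) / real M) \<le> sqrt (\<kappa>^2)"
    proof (rule real_sqrt_le_mono)
      have "(2*T+1) / \<kappa>^2 < real M" by (rule M)
      hence "real (2*T+1) < real M * \<kappa>^2" using \<kappa> by (simp add: divide_less_eq)
      thus "real (2*T+1) / real M \<le> \<kappa>^2" using M1 by (simp add: divide_le_eq mult.commute)
    qed
    also have "\<dots> = \<kappa>" using \<kappa> by simp
    finally show ?thesis by simp
  qed
  have EZ: "Ew (Wd p L) Z \<le> \<epsilon> / 3"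
  proof -
    have "Ew (Wd p L) Z = (\<Sum>r\<in>Q. Ew (Wd p L) (\<lambda>v. \<bar>G r v\<bar>))"
      unfolding Z_def by (rule Bochner_Integration.integral_sum) (rule bint[where B=1], use G1 in simp)
    also have "\<dots> \<le> (\<Sum>r\<in>Q. \<kappa>)" by (rule sum_mono) (rule EG)
    also have "\<dots> = real (card Q) * \<kappa>" by simp
    also have "\<dots> \<le> \<epsilon> / 3" unfolding \<kappa>_def using e by (simp add: field_simps)
    finally show ?thesis .
  qed
  have det: "\<bar>\<Sum>i<N. X i\<bar> \<le> (\<Sum>j<N. Z (win \<alpha> j L)) + 2 * real M" for N
  proof -
    have GX: "real M * G (s j) (win \<alpha> j L) = (\<Sum>m<M. X (j+m))" for j
    proof -
      have "Yf p \<delta> H T (s j) m (win \<alpha> j L) = X (j+m)" if "m < M" for m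
      proof -
        have a: "take m (win \<alpha> j L) = win \<alpha> j m" using that unfolding L_def by (intro take_win) simp
        have b: "take T (drop m (win \<alpha> j L)) = win \<alpha> (j+m) T" using that unfolding L_def by (intro take_drop_win) simp
        have c: "foldl \<delta> (s j) (win \<alpha> j m) = s (j+m)" unfolding s_def by (simp add: st_add)
        show ?thesis unfolding Yf_def a b c X_def ..
      qed
      thus ?thesis unfolding G_def using M1 by simp
    qed
    have sw: "(\<Sum>j<N. \<Sum>m<M. X (j+m)) = (\<Sum>m<M. \<Sum>j<N. X (j+m))" by (rule sum.swap)
    have eq: "real M * (\<Sum>i<N. X i) - (\<Sum>j<N. real M * G (s j) (win \<alpha> j L)) = (\<Sum>m<M. (\<Sum>i<N. X i) - (\<Sum>j<N. X (j+m)))"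
      unfolding GX sw sum_subtractf by simp
    have D: "\<bar>\<Sum>m<M. (\<Sum>i<N. X i) - (\<Sum>j<N. X (j+m))\<bar> \<le> real M * (2 * real M)"
    proof -
      have "\<bar>(\<Sum>i<N. X i) - (\<Sum>j<N. X (j+m))\<bar> \<le> 2 * real M" if "m < M" for m
        using shift_diff[where X=X and N=N and m=m] X1 that by (simp add: abs_minus_commute)
      thus ?thesis using sum_abs_le[of "{..<M}" "\<lambda>m. (\<Sum>i<N. X i) - (\<Sum>j<N. X (j+m))" "2 * real M"] by simp
    qed
    have Bs: "\<bar>\<Sum>j<N. real M * G (s j) (win \<alpha> j L)\<bar> \<le> real M * (\<Sum>j<N. Z (win \<alpha> j L))"
    proof -
      have "\<bar>G (s j) (win \<alpha> j L)\<bar> \<le> Z (win \<alpha> j L)" for j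
        unfolding Z_def by (rule member_le_sum) (use sQ Q(1) in auto)
      hence "\<bar>\<Sum>j<N. G (s j) (win \<alpha> j L)\<bar> \<le> (\<Sum>j<N. Z (win \<alpha> j L))"
        using sum_abs[of "\<lambda>j. G (s j) (win \<alpha> j L)" "{..<N}"] sum_mono[of "{..<N}" "\<lambda>j. \<bar>G (s j) (win \<alpha> j L)\<bar>" "\<lambda>j. Z (win \<alpha> j L)"]
        by (meson order_trans)
      thus ?thesis by (simp add: sum_distrib_left[symmetric] abs_mult mult_left_mono)
    qed
    have "real M * \<bar>\<Sum>i<N. X i\<bar> = \<bar>real M * (\<Sum>i<N. X i)\<bar>" by (simp add: abs_mult)
    also have "\<dots> \<le> \<bar>real M * (\<Sum>i<N. X i) - (\<Sum>j<N. real M * G (s j) (win \<alpha> j L))\<bar> + \<bar>\<Sum>j<N. real M * G (s j) (win \<alpha> j L)\<bar>"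
      by (metis abs_triangle_ineq diff_add_cancel)
    finally have "real M * \<bar>\<Sum>i<N. X i\<bar> \<le> real M * ((\<Sum>j<N. Z (win \<alpha> j L)) + 2 * real M)"
      using eq D Bs by (simp add: algebra_simps)
    thus ?thesis using M1 by simp
  qed
  have ev1: "eventually (\<lambda>N. (\<Sum>j<N. Z (win \<alpha> j L)) / real N \<le> Ew (Wd p L) Z + \<epsilon>/3) sequentially"
  proof -
    have alL: "\<And>w. length w = L \<Longrightarrow> (\<lambda>N. real (occ w (pref \<alpha> N)) / real N) \<longlonglongrightarrow> prod_list (map p w)"
    proof -
      fix w :: "'a list" assume "length w = L"
      hence "w \<noteq> []" using L1 by auto
      thus "(\<lambda>N. real (occ w (pref \<alpha> N)) / real N) \<longlonglongrightarrow> prod_list (map p w)" by (rule al)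
    qed
    show ?thesis by (rule window_lemma[OF bp hs[OF L1] alL L1 Zb]) (use e in auto)
  qed
  obtain N0 :: nat where N0: "real N0 > 6 * real M / \<epsilon>" using reals_Archimedean2 by blast
  show "eventually (\<lambda>N. dist ((\<Sum>i<N. H (st \<delta> qs \<alpha> i) (win \<alpha> i T) - Ew (Wd p T) (H (st \<delta> qs \<alpha> i))) / real N) 0 < \<epsilon>) sequentially"
    using ev1 eventually_ge_at_top[of "Suc N0"]
  proof eventually_elim
    case (elim N)
    have Npos: "real N > 0" using elim by simp
    have "2 * real M / real N < \<epsilon> / 3"
    proof -
      have "6 * real M / \<epsilon> < real N" using N0 elim by linarith
      thus ?thesis using e Npos by (simp add: field_simps)
    qed
    have "\<bar>\<Sum>i<N. X i\<bar> / real N \<le> ((\<Sum>j<N. Z (win \<alpha> j L)) + 2 * real M) / real N"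
      using det[of N] Npos by (simp add: divide_right_mono)
    also have "\<dots> = (\<Sum>j<N. Z (win \<alpha> j L)) / real N + 2 * real M / real N" by (simp add: add_divide_distrib)
    also have "\<dots> < \<epsilon>" using elim(1) EZ \<open>2 * real M / real N < \<epsilon> / 3\<close> by linarith
    finally show ?case unfolding X_def s_def by simp
  qed
qed

end


lemma occ_single: "occ [a] (pref \<beta> J) = card {k. k < J \<and> \<beta> k = a}"
proof -
  have "{j. j + length [a] \<le> length (pref \<beta> J) \<and> take (length [a]) (drop j (pref \<beta> J)) = [a]} = {k. k < J \<and> \<beta> k = a}"
    by (auto simp: pref_def take_Suc_conv_app_nth)
  thus ?thesis unfolding occ_def by simp
qed

lemma dc_set:
  fixes D :: "nat set"
  assumes "finite D" "\<And>k k'. k \<in> D \<Longrightarrow> k' < k \<Longrightarrow> k' \<in> D"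
  shows "D = {..<card D}"
proof (cases "D = {}")
  case True then show ?thesis by simp
next
  case False
  have "D = {..<Suc (Max D)}"
  proof
    show "D \<subseteq> {..<Suc (Max D)}" using assms(1) by (auto simp: less_Suc_eq_le)
    show "{..<Suc (Max D)} \<subseteq> D"
    proof
      fix k assume "k \<in> {..<Suc (Max D)}"
      hence "k < Max D \<or> k = Max D" by auto
      thus "k \<in> D" using assms Max_in[OF assms(1) False] by auto
    qed
  qed
  thus ?thesis by (metis card_lessThan)
qed

context
  fixes P :: "nat set"
  assumes inf: "infinite P"
begin

definition cP :: "nat \<Rightarrow> nat" where "cP K = card {k. enumerate P k < K}"

lemma cP_fin: "finite {k. enumerate P k < K}"
  by (rule finite_subset[of _ "{..<K}"]) (auto intro: le_less_trans[OF le_enumerate[OF inf]])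

lemma cP_set: "{k. enumerate P k < K} = {..<cP K}"
  unfolding cP_def
  by (rule dc_set[OF cP_fin]) (use inf in \<open>auto intro: less_trans[OF enumerate_mono[OF _ inf]]\<close>)

lemma cP_enum: "cP (enumerate P J) = J"
proof -
  have "{k. enumerate P k < enumerate P J} = {..<J}" using inf by auto
  thus ?thesis unfolding cP_def by simp
qed

lemma cP_mono: "K \<le> K' \<Longrightarrow> cP K \<le> cP K'"
  unfolding cP_def by (rule card_mono[OF cP_fin]) auto

lemma cP_tendsto: "filterlim cP at_top sequentially"
  unfolding filterlim_at_top
proof (intro allI)
  fix Z
  show "eventually (\<lambda>K. Z \<le> cP K) sequentially"
    using eventually_ge_at_top[of "enumerate P Z"]
    by eventually_elim (metis cP_enum cP_mono)
qed

lemma enum_tendsto: "filterlim (enumerate P) at_top sequentially"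
  by (rule filterlim_subseq) (simp add: strict_mono_def inf)

lemma card_P_enum: "card {i. i \<in> P \<and> i < K \<and> R i} = card {k. enumerate P k < K \<and> R (enumerate P k)}"
proof -
  have "{i. i \<in> P \<and> i < K \<and> R i} = enumerate P ` {k. enumerate P k < K \<and> R (enumerate P k)}"
    using enumerate_Ex[OF inf] enumerate_in_set[OF inf] by blast
  thus ?thesis by (simp add: card_image inj_on_subset[OF inj_enumerate[OF inf]])
qed

lemma freq_transfer:
  fixes x :: real
  shows "(\<lambda>K. real (card {i. i \<in> P \<and> i < K \<and> \<alpha> i = a}) / real (card {i. i \<in> P \<and> i < K})) \<longlonglongrightarrow> x
     \<longleftrightarrow> (\<lambda>J. real (occ [a] (pref (\<lambda>k. \<alpha> (enumerate P k)) J)) / real J) \<longlonglongrightarrow> x"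
proof -
  define F where "F J = real (occ [a] (pref (\<lambda>k. \<alpha> (enumerate P k)) J)) / real J" for J
  have g: "real (card {i. i \<in> P \<and> i < K \<and> \<alpha> i = a}) / real (card {i. i \<in> P \<and> i < K}) = F (cP K)" for K
  proof -
    have 1: "card {i. i \<in> P \<and> i < K \<and> \<alpha> i = a} = card {k. k < cP K \<and> \<alpha> (enumerate P k) = a}"
      using card_P_enum[of K "\<lambda>i. \<alpha> i = a"] cP_set[of K] by (simp add: set_eq_iff)
    have 2: "card {i. i \<in> P \<and> i < K} = cP K"
      using card_P_enum[of K "\<lambda>i. True"] unfolding cP_def by simp
    show ?thesis unfolding F_def 1 2 occ_single ..
  qed
  show ?thesis unfolding g
  proof
    assume "(\<lambda>K. F (cP K)) \<longlonglongrightarrow> x"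
    hence "(\<lambda>J. F (cP (enumerate P J))) \<longlonglongrightarrow> x" by (rule filterlim_compose[OF _ enum_tendsto])
    thus "(\<lambda>J. real (occ [a] (pref (\<lambda>k. \<alpha> (enumerate P k)) J)) / real J) \<longlonglongrightarrow> x" by (simp add: cP_enum F_def)
  next
    assume "(\<lambda>J. real (occ [a] (pref (\<lambda>k. \<alpha> (enumerate P k)) J)) / real J) \<longlonglongrightarrow> x"
    hence "F \<longlonglongrightarrow> x" unfolding F_def .
    thus "(\<lambda>K. F (cP K)) \<longlonglongrightarrow> x" by (rule filterlim_compose[OF _ cP_tendsto])
  qed
qed

end


definition selw :: "'a list set \<Rightarrow> 'a list \<Rightarrow> 'a list" where
  "selw S u = map (\<lambda>i. u ! i) (filter (\<lambda>i. take i u \<in> S) [0..<length u])"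

lemma selw_Nil[simp]: "selw S [] = []" by (simp add: selw_def)

lemma selw_snoc: "selw S (u@[a]) = selw S u @ (if u \<in> S then [a] else [])"
proof -
  have "filter (\<lambda>i. take i (u@[a]) \<in> S) [0..<length u] = filter (\<lambda>i. take i u \<in> S) [0..<length u]"
    by (rule filter_cong) auto
  moreover have "map (\<lambda>i. (u@[a]) ! i) (filter (\<lambda>i. take i u \<in> S) [0..<length u]) = map (\<lambda>i. u ! i) (filter (\<lambda>i. take i u \<in> S) [0..<length u])"
    by (rule map_cong) (auto simp: nth_append)
  ultimately show ?thesis unfolding selw_def by simp
qed

lemma pref_Suc: "pref \<alpha> (Suc n) = pref \<alpha> n @ [\<alpha> n]" by (simp add: pref_def)

lemma selw_pref:
  assumes inf: "infinite (sel_positions S \<alpha>)"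
  shows "selw S (pref \<alpha> n) = pref (selected S \<alpha>) (cP (sel_positions S \<alpha>) n)"
proof (induction n)
  case 0
  have "cP (sel_positions S \<alpha>) 0 = 0" unfolding cP_def[OF inf] by simp
  then show ?case by (simp add: pref_def)
next
  case (Suc n)
  let ?P = "sel_positions S \<alpha>" and ?t = "enumerate (sel_positions S \<alpha>)"
  show ?case
  proof (cases "n \<in> ?P")
    case True
    then obtain j where j: "?t j = n" using enumerate_Ex[OF inf] by blast
    have c1: "cP ?P n = j" using cP_enum[OF inf, of j] j by simp
    have "{k. ?t k < Suc n} = {..<Suc j}" using inf j by (auto simp: less_Suc_eq_le)
    hence c2: "cP ?P (Suc n) = Suc j" unfolding cP_def[OF inf] by simp
    have "pref \<alpha> n \<in> S" using True by (simp add: sel_positions_def)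
    thus ?thesis using Suc.IH c1 c2 j by (simp add: pref_Suc selw_snoc selected_def)
  next
    case False
    have "{k. ?t k < Suc n} = {k. ?t k < n}" using False enumerate_in_set[OF inf] by (auto simp: less_Suc_eq) 
    hence c2: "cP ?P (Suc n) = cP ?P n" unfolding cP_def[OF inf] by simp
    have "pref \<alpha> n \<notin> S" using False by (simp add: sel_positions_def)
    thus ?thesis using Suc.IH c2 by (simp add: pref_Suc selw_snoc)
  qed
qed

lemma selw_pref_enum:
  assumes inf: "infinite (sel_positions S \<alpha>)"
  shows "selw S (pref \<alpha> (enumerate (sel_positions S \<alpha>) k)) = pref (selected S \<alpha>) k"
  using selw_pref[OF inf] cP_enum[OF inf] by simp

lemma enumerate_image:
  assumes t: "strict_mono t" and inf: "infinite P"
  shows "enumerate (t ` P) n = t (enumerate P n)"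
  using inf
proof (induction n arbitrary: P)
  case 0
  have "(LEAST x. x \<in> t ` P) = t (LEAST x. x \<in> P)"
  proof (rule Least_equality)
    have "(LEAST x. x \<in> P) \<in> P" using 0 by (metis LeastI infinite_imp_nonempty ex_in_conv)
    thus "t (LEAST x. x \<in> P) \<in> t ` P" by blast
    show "\<And>y. y \<in> t ` P \<Longrightarrow> t (LEAST x. x \<in> P) \<le> y"
    proof -
      fix y assume "y \<in> t ` P"
      then obtain x where x: "x \<in> P" "y = t x" by blast
      have "(LEAST x. x \<in> P) \<le> x" using x(1) by (rule Least_le)
      thus "t (LEAST x. x \<in> P) \<le> y" using x(2) strict_mono_less_eq[OF t] by simp
    qed
  qed
  thus ?case by (simp add: enumerate_0)
next
  case (Suc n)
  have m: "(LEAST x. x \<in> t ` P) = t (LEAST x. x \<in> P)"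
  proof (rule Least_equality)
    have "(LEAST x. x \<in> P) \<in> P" using Suc.prems by (metis LeastI infinite_imp_nonempty ex_in_conv)
    thus "t (LEAST x. x \<in> P) \<in> t ` P" by blast
    show "\<And>y. y \<in> t ` P \<Longrightarrow> t (LEAST x. x \<in> P) \<le> y"
    proof -
      fix y assume "y \<in> t ` P"
      then obtain x where x: "x \<in> P" "y = t x" by blast
      have "(LEAST x. x \<in> P) \<le> x" using x(1) by (rule Least_le)
      thus "t (LEAST x. x \<in> P) \<le> y" using x(2) strict_mono_less_eq[OF t] by simp
    qed
  qed
  have i: "inj t" using t by (rule strict_mono_imp_inj_on)
  have "t ` P - {t (LEAST x. x \<in> P)} = t ` (P - {LEAST x. x \<in> P})" using i by (auto dest: injD)
  moreover have "infinite (P - {LEAST x. x \<in> P})" using Suc.prems by simp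
  ultimately show ?case using Suc.IH by (simp add: enumerate_Suc m)
qed

lemma comp_sel:
  assumes inf: "infinite (sel_positions S1 \<alpha>)"
  shows "sel_positions {u. u \<in> S1 \<and> selw S1 u \<in> S2} \<alpha> = enumerate (sel_positions S1 \<alpha>) ` sel_positions S2 (selected S1 \<alpha>)"
    (is "?L = ?t ` ?P2")
proof
  show "?L \<subseteq> ?t ` ?P2"
  proof
    fix i assume "i \<in> ?L"
    hence i1: "i \<in> sel_positions S1 \<alpha>" and i2: "selw S1 (pref \<alpha> i) \<in> S2" by (auto simp: sel_positions_def)
    obtain k where k: "?t k = i" using enumerate_Ex[OF inf i1] by blast
    have "pref (selected S1 \<alpha>) k \<in> S2" using i2 selw_pref_enum[OF inf, of k] k by simp
    thus "i \<in> ?t ` ?P2" using k by (auto simp: sel_positions_def)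
  qed
  show "?t ` ?P2 \<subseteq> ?L"
  proof
    fix i assume "i \<in> ?t ` ?P2"
    then obtain k where k: "i = ?t k" "pref (selected S1 \<alpha>) k \<in> S2" by (auto simp: sel_positions_def)
    have "i \<in> sel_positions S1 \<alpha>" using k(1) enumerate_in_set[OF inf] by simp
    thus "i \<in> ?L" using k selw_pref_enum[OF inf, of k] by (auto simp: sel_positions_def)
  qed
qed

lemma comp_sel_inf:
  assumes inf: "infinite (sel_positions S1 \<alpha>)"
  shows "sel_infinite {u. u \<in> S1 \<and> selw S1 u \<in> S2} \<alpha> \<longleftrightarrow> sel_infinite S2 (selected S1 \<alpha>)"
  unfolding sel_infinite_def comp_sel[OF inf]
  using finite_imageD[OF _ inj_on_subset[OF inj_enumerate[OF inf]]] by blast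

lemma comp_selected:
  assumes inf: "infinite (sel_positions S1 \<alpha>)" and inf2: "sel_infinite S2 (selected S1 \<alpha>)"
  shows "selected {u. u \<in> S1 \<and> selw S1 u \<in> S2} \<alpha> = selected S2 (selected S1 \<alpha>)"
proof
  fix k
  have sm: "strict_mono (enumerate (sel_positions S1 \<alpha>))" using inf by (simp add: strict_mono_def)
  show "selected {u. u \<in> S1 \<and> selw S1 u \<in> S2} \<alpha> k = selected S2 (selected S1 \<alpha>) k"
    unfolding selected_def[of "{u. u \<in> S1 \<and> selw S1 u \<in> S2}"] comp_sel[OF inf] enumerate_image[OF sm inf2[unfolded sel_infinite_def]]
    by (simp add: selected_def)
qed


lemma dfa_comp:
  assumes A1: "is_dfa Q1 \<delta>1 q1 F1" and A2: "is_dfa Q2 \<delta>2 q2 F2"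
  shows "\<exists>Q \<delta> qs F. is_dfa Q \<delta> qs F \<and> dfa_strategy \<delta> qs F =
     {u. u \<in> dfa_strategy \<delta>1 q1 F1 \<and> selw (dfa_strategy \<delta>1 q1 F1) u \<in> dfa_strategy \<delta>2 q2 F2}"
proof -
  define S1 where "S1 = dfa_strategy \<delta>1 q1 F1"
  define \<delta> where "\<delta> n a = (case prod_decode n of (x, y) \<Rightarrow> prod_encode (\<delta>1 x a, if x \<in> F1 then \<delta>2 y a else y))" for n a
  define qs where "qs = prod_encode (q1, q2)"
  define Q where "Q = prod_encode ` (Q1 \<times> Q2)"
  define F where "F = prod_encode ` (F1 \<times> F2)"
  have inv: "foldl \<delta> qs u = prod_encode (foldl \<delta>1 q1 u, foldl \<delta>2 q2 (selw S1 u))" for u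
  proof (induction u rule: rev_induct)
    case Nil then show ?case by (simp add: qs_def)
  next
    case (snoc a u)
    have "u \<in> S1 \<longleftrightarrow> foldl \<delta>1 q1 u \<in> F1" by (simp add: S1_def dfa_strategy_def)
    thus ?case using snoc by (simp add: selw_snoc \<delta>_def)
  qed
  have "is_dfa Q \<delta> qs F"
    using A1 A2 unfolding is_dfa_def Q_def F_def qs_def \<delta>_def by auto
  moreover have "dfa_strategy \<delta> qs F = {u. u \<in> S1 \<and> selw S1 u \<in> dfa_strategy \<delta>2 q2 F2}"
  proof -
    have "foldl \<delta> qs u \<in> F \<longleftrightarrow> foldl \<delta>1 q1 u \<in> F1 \<and> foldl \<delta>2 q2 (selw S1 u) \<in> F2" for u
      unfolding inv F_def using inj_prod_encode[of UNIV] by (auto dest: inj_onD)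
    thus ?thesis by (auto simp: dfa_strategy_def S1_def)
  qed
  ultimately show ?thesis unfolding S1_def by blast
qed

definition lastn :: "nat \<Rightarrow> 'b list \<Rightarrow> 'b list" where "lastn k xs = rev (take k (rev xs))"

lemma lastn_lastn: "lastn k (lastn k xs @ ys) = lastn k (xs @ ys)"
  unfolding lastn_def by (simp add: take_append min_def)

lemma lastn_drop: "lastn k xs = drop (length xs - k) xs"
  unfolding lastn_def by (simp add: take_rev)

lemma post_dfa:
  fixes w :: "'a::countable list"
  shows "\<exists>Q \<delta> qs F. is_dfa Q \<delta> qs F \<and> dfa_strategy \<delta> qs F = postnikova w"
proof -
  define k where "k = length w"
  define g where "g a = (if a \<in> set w then Some a else None)" for a
  define \<delta> where "\<delta> n a = to_nat (lastn k ((from_nat n :: 'a option list) @ [g a]))" for n a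
  define qs where "qs = to_nat ([] :: 'a option list)"
  define F where "F = {to_nat (map Some w)}"
  define LS where "LS = {l :: 'a option list. set l \<subseteq> insert None (Some ` set w) \<and> length l \<le> k}"
  define Q where "Q = to_nat ` LS"
  have inv: "foldl \<delta> qs u = to_nat (lastn k (map g u))" for u
  proof (induction u rule: rev_induct)
    case Nil then show ?case by (simp add: qs_def lastn_def)
  next
    case (snoc a u)
    then show ?case by (simp add: \<delta>_def lastn_lastn)
  qed
  have "finite LS" unfolding LS_def by (rule finite_lists_length_le) simp
  hence fQ: "finite Q" unfolding Q_def by simp
  have gs: "g a \<in> insert None (Some ` set w)" for a by (simp add: g_def)
  have cl: "\<delta> q a \<in> Q" if qQ: "q \<in> Q" for q a
  proof -
    obtain l where l: "l \<in> LS" "q = to_nat l" using qQ unfolding Q_def by auto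
    have s1: "set (lastn k (l @ [g a])) \<subseteq> set (l @ [g a])"
      unfolding lastn_def using set_take_subset[of k "rev (l @ [g a])"] by simp
    have s2: "length (lastn k (l @ [g a])) \<le> k" unfolding lastn_def by simp
    have "lastn k (l @ [g a]) \<in> LS"
      using l(1) gs[of a] s1 s2 unfolding LS_def by auto
    thus ?thesis unfolding \<delta>_def l(2) Q_def by simp
  qed
  have "is_dfa Q \<delta> qs F"
    unfolding is_dfa_def using fQ cl
    by (auto simp: qs_def Q_def LS_def F_def intro!: imageI) (auto simp: k_def)
  moreover have "dfa_strategy \<delta> qs F = postnikova w"
  proof -
    have "lastn k (map g u) = map Some w \<longleftrightarrow> u \<in> postnikova w" for u
    proof
      assume h: "lastn k (map g u) = map Some w"
      define s where "s = drop (length u - k) u"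
      have "map g s = map Some w" using h unfolding s_def lastn_drop by (simp add: drop_map)
      hence ls: "length s = length w" by (metis length_map)
      have "s = w"
      proof (rule nth_equalityI)
        show "length s = length w" by (rule ls)
        fix i assume "i < length s"
        hence "g (s ! i) = Some (w ! i)" using \<open>map g s = map Some w\<close> ls by (metis nth_map)
        thus "s ! i = w ! i" unfolding g_def by (auto split: if_splits)
      qed
      hence "u = take (length u - k) u @ w" unfolding s_def by (metis append_take_drop_id)
      thus "u \<in> postnikova w" unfolding postnikova_def by blast
    next
      assume "u \<in> postnikova w"
      then obtain v where u: "u = v @ w" unfolding postnikova_def by blast
      have "map g w = map Some w" by (simp add: g_def)
      thus "lastn k (map g u) = map Some w" unfolding u lastn_drop k_def by simp
    qed
    thus ?thesis unfolding dfa_strategy_def inv F_def by auto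
  qed
  ultimately show ?thesis by blast
qed


lemma win_Suc: "win \<alpha> j (Suc n) = win \<alpha> j n @ [\<alpha> (j+n)]" by (simp add: win_def)

lemma occ_gen: "occ u (pref \<alpha> K) = card {j. j + length u \<le> K \<and> win \<alpha> j (length u) = u}"
proof -
  have "take (length u) (drop j (pref \<alpha> K)) = win \<alpha> j (length u)" if "j + length u \<le> K" for j
    using that by (simp add: pref_def win_def take_map drop_map)
  hence "{j. j + length u \<le> length (pref \<alpha> K) \<and> take (length u) (drop j (pref \<alpha> K)) = u} =
         {j. j + length u \<le> K \<and> win \<alpha> j (length u) = u}" by auto
  thus ?thesis unfolding occ_def by simp
qed

lemma post_pos: "i \<in> sel_positions (postnikova w) \<alpha> \<longleftrightarrow> length w \<le> i \<and> win \<alpha> (i - length w) (length w) = w"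
proof -
  have d: "drop (i - length w) (pref \<alpha> i) = win \<alpha> (i - length w) (length w)" if "length w \<le> i"
    using that by (simp add: pref_def win_def drop_map)
  show ?thesis
  proof
    assume "i \<in> sel_positions (postnikova w) \<alpha>"
    then obtain v where v: "pref \<alpha> i = v @ w" by (auto simp: sel_positions_def postnikova_def)
    hence l: "length w \<le> i" by (metis le_add2 length_append length_pref)
    have "drop (i - length w) (pref \<alpha> i) = w" using v by (metis append_eq_conv_conj length_append length_pref add_diff_cancel_right')
    thus "length w \<le> i \<and> win \<alpha> (i - length w) (length w) = w" using d[OF l] l by simp
  next
    assume h: "length w \<le> i \<and> win \<alpha> (i - length w) (length w) = w"
    hence "pref \<alpha> i = take (i - length w) (pref \<alpha> i) @ w" using d by (metis append_take_drop_id)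
    thus "i \<in> sel_positions (postnikova w) \<alpha>" by (auto simp: sel_positions_def postnikova_def)
  qed
qed

lemma post_count_a:
  "card {i. i \<in> sel_positions (postnikova w) \<alpha> \<and> i < K \<and> \<alpha> i = a} = occ (w@[a]) (pref \<alpha> K)"
proof -
  let ?n = "length w"
  have "{i. i \<in> sel_positions (postnikova w) \<alpha> \<and> i < K \<and> \<alpha> i = a} = (\<lambda>j. j + ?n) ` {j. j + length (w@[a]) \<le> K \<and> win \<alpha> j (length (w@[a])) = w@[a]}"
  proof (rule set_eqI, rule iffI)
    fix i assume "i \<in> {i. i \<in> sel_positions (postnikova w) \<alpha> \<and> i < K \<and> \<alpha> i = a}"
    hence h: "?n \<le> i" "win \<alpha> (i - ?n) ?n = w" "i < K" "\<alpha> i = a" using post_pos by auto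
    hence "i - ?n + length (w@[a]) \<le> K \<and> win \<alpha> (i - ?n) (length (w@[a])) = w@[a]"
      by (simp add: win_Suc)
    thus "i \<in> (\<lambda>j. j + ?n) ` {j. j + length (w@[a]) \<le> K \<and> win \<alpha> j (length (w@[a])) = w@[a]}"
      using h(1) by (intro image_eqI[of _ _ "i - ?n"]) auto
  next
    fix i assume "i \<in> (\<lambda>j. j + ?n) ` {j. j + length (w@[a]) \<le> K \<and> win \<alpha> j (length (w@[a])) = w@[a]}"
    then obtain j where j: "i = j + ?n" "j + ?n + 1 \<le> K" "win \<alpha> j ?n @ [\<alpha> (j + ?n)] = w@[a]"
      by (auto simp: win_Suc)
    thus "i \<in> {i. i \<in> sel_positions (postnikova w) \<alpha> \<and> i < K \<and> \<alpha> i = a}"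
      by (auto simp: post_pos)
  qed
  thus ?thesis unfolding occ_gen[of "w@[a]"] by (simp add: card_image)
qed

lemma post_count:
  "card {i. i \<in> sel_positions (postnikova w) \<alpha> \<and> i < Suc K} = occ w (pref \<alpha> K)"
proof -
  let ?n = "length w"
  have "{i. i \<in> sel_positions (postnikova w) \<alpha> \<and> i < Suc K} = (\<lambda>j. j + ?n) ` {j. j + ?n \<le> K \<and> win \<alpha> j ?n = w}"
  proof (rule set_eqI, rule iffI)
    fix i assume "i \<in> {i. i \<in> sel_positions (postnikova w) \<alpha> \<and> i < Suc K}"
    hence h: "?n \<le> i" "win \<alpha> (i - ?n) ?n = w" "i < Suc K" using post_pos by auto
    thus "i \<in> (\<lambda>j. j + ?n) ` {j. j + ?n \<le> K \<and> win \<alpha> j ?n = w}"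
      by (intro image_eqI[of _ _ "i - ?n"]) auto
  next
    fix i assume "i \<in> (\<lambda>j. j + ?n) ` {j. j + ?n \<le> K \<and> win \<alpha> j ?n = w}"
    thus "i \<in> {i. i \<in> sel_positions (postnikova w) \<alpha> \<and> i < Suc K}"
      by (auto simp: post_pos)
  qed
  thus ?thesis unfolding occ_gen[of w] by (simp add: card_image)
qed

lemma post_infinite:
  assumes lim: "(\<lambda>K. real (occ w (pref \<alpha> K)) / real K) \<longlonglongrightarrow> m" and m: "m > 0"
  shows "sel_infinite (postnikova w) \<alpha>"
proof (rule ccontr)
  let ?P = "sel_positions (postnikova w) \<alpha>"
  assume "\<not> sel_infinite (postnikova w) \<alpha>"
  hence fin: "finite ?P" unfolding sel_infinite_def by simp
  have le: "real (occ w (pref \<alpha> K)) / real K \<le> real (card ?P) / real K" for K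
  proof -
    have "occ w (pref \<alpha> K) \<le> card ?P" unfolding post_count[symmetric] by (rule card_mono[OF fin]) auto
    thus ?thesis by (simp add: divide_right_mono)
  qed
  have "(\<lambda>K. real (card ?P) / real K) \<longlonglongrightarrow> 0"
    by (intro tendsto_divide_0[OF tendsto_const] filterlim_at_top_imp_at_infinity[OF filterlim_real_sequentially])
  hence "m \<le> 0" using lim le by (intro tendsto_le[OF _ _ lim]) auto
  thus False using m by simp
qed

lemma post_freq:
  assumes lim: "(\<lambda>K. real (occ w (pref \<alpha> K)) / real K) \<longlonglongrightarrow> m"
    and inf: "sel_infinite (postnikova w) \<alpha>"
    and fr: "(\<lambda>J. real (occ [a] (pref (selected (postnikova w) \<alpha>) J)) / real J) \<longlonglongrightarrow> x"
  shows "(\<lambda>K. real (occ (w@[a]) (pref \<alpha> K)) / real K) \<longlonglongrightarrow> m * x"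
proof -
  let ?P = "sel_positions (postnikova w) \<alpha>"
  have iP: "infinite ?P" using inf unfolding sel_infinite_def .
  define A where "A K = real (card {i. i \<in> ?P \<and> i < K \<and> \<alpha> i = a})" for K
  define C where "C K = real (card {i. i \<in> ?P \<and> i < K})" for K
  have AC: "(\<lambda>K. A K / C K) \<longlonglongrightarrow> x"
    using freq_transfer[OF iP, of \<alpha> a x] fr unfolding A_def C_def selected_def by simp
  have fC: "finite {i. i \<in> ?P \<and> i < K}" for K by simp
  have C1: "C K \<le> real (occ w (pref \<alpha> K)) \<and> real (occ w (pref \<alpha> K)) \<le> C K + 1" for K
  proof -
    have "card {i. i \<in> ?P \<and> i < Suc K} \<le> card (insert K {i. i \<in> ?P \<and> i < K})"
      by (rule card_mono) auto
    also have "\<dots> \<le> card {i. i \<in> ?P \<and> i < K} + 1" by (simp add: card_insert_if)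
    finally have "card {i. i \<in> ?P \<and> i < Suc K} \<le> card {i. i \<in> ?P \<and> i < K} + 1" .
    moreover have "card {i. i \<in> ?P \<and> i < K} \<le> card {i. i \<in> ?P \<and> i < Suc K}" by (rule card_mono) auto
    ultimately show ?thesis unfolding C_def post_count[symmetric] by simp
  qed
  have CK: "(\<lambda>K. C K / real K) \<longlonglongrightarrow> m"
  proof -
    have d: "(\<lambda>K. (real (occ w (pref \<alpha> K)) - C K) / real K) \<longlonglongrightarrow> 0"
    proof (rule tendsto_sandwich[of "\<lambda>_. 0" _ _ "\<lambda>K. 1 / real K"])
      show "eventually (\<lambda>K. 0 \<le> (real (occ w (pref \<alpha> K)) - C K) / real K) sequentially" using C1 by simp
      show "eventually (\<lambda>K. (real (occ w (pref \<alpha> K)) - C K) / real K \<le> 1 / real K) sequentially"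
      proof (intro always_eventually allI)
        fix K have "real (occ w (pref \<alpha> K)) - C K \<le> 1" using C1[of K] by linarith
        thus "(real (occ w (pref \<alpha> K)) - C K) / real K \<le> 1 / real K" by (simp add: divide_right_mono)
      qed
    qed (auto intro: tendsto_divide_0[OF tendsto_const] filterlim_at_top_imp_at_infinity[OF filterlim_real_sequentially])
    have "(\<lambda>K. real (occ w (pref \<alpha> K)) / real K - (real (occ w (pref \<alpha> K)) - C K) / real K) \<longlonglongrightarrow> m - 0"
      by (rule tendsto_diff[OF lim d])
    thus ?thesis by (simp add: diff_divide_distrib)
  qed
  have eq: "A K / C K * (C K / real K) = real (occ (w@[a]) (pref \<alpha> K)) / real K" for K
  proof (cases "C K = 0")
    case True
    hence "card {i. i \<in> ?P \<and> i < K} = 0" unfolding C_def by simp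
    hence "{i. i \<in> ?P \<and> i < K} = {}" using fC[of K] by simp
    hence "{i. i \<in> ?P \<and> i < K \<and> \<alpha> i = a} = {}" by auto
    hence "occ (w@[a]) (pref \<alpha> K) = 0" unfolding post_count_a[symmetric] by simp
    thus ?thesis using True by simp
  next
    case False
    thus ?thesis unfolding A_def post_count_a by simp
  qed
  have "(\<lambda>K. A K / C K * (C K / real K)) \<longlonglongrightarrow> x * m" by (rule tendsto_mult[OF AC CK])
  thus ?thesis unfolding eq by (simp add: mult.commute)
qed


lemma st_F: "i \<in> sel_positions (dfa_strategy \<delta> qs F) \<alpha> \<longleftrightarrow> st \<delta> qs \<alpha> i \<in> F"
  by (simp add: sel_positions_def dfa_strategy_def st_def)

lemma prod_pos: "(\<forall>a. p a > (0::real)) \<Longrightarrow> prod_list (map p u) > 0"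
  by (induction u) auto

context
  fixes p :: "'a::countable \<Rightarrow> real"
  assumes bp: "bernoulli_distr p" and pos: "\<forall>a. p a > 0"
    and hs: "\<And>L. L \<ge> 1 \<Longrightarrow> ((\<lambda>w. prod_list (map p w)) has_sum 1) {w. length w = L}"
begin

lemma dfa_density:
  assumes al: "\<And>w. w \<noteq> [] \<Longrightarrow> (\<lambda>N. real (occ w (pref \<alpha> N)) / real N) \<longlonglongrightarrow> prod_list (map p w)"
    and D: "is_dfa Q \<delta> qs F" and inf: "sel_infinite (dfa_strategy \<delta> qs F) \<alpha>"
  shows "\<exists>c>0. eventually (\<lambda>K. real (card {i. i \<in> sel_positions (dfa_strategy \<delta> qs F) \<alpha> \<and> i < K}) \<ge> c * real K) sequentially"
proof -
  let ?P = "sel_positions (dfa_strategy \<delta> qs F) \<alpha>"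
  let ?s = "st \<delta> qs \<alpha>"
  have Q: "finite Q" "\<forall>q\<in>Q. \<forall>a. \<delta> q a \<in> Q" "qs \<in> Q" "F \<subseteq> Q" using D unfolding is_dfa_def by auto
  define R where "R = {r \<in> Q. \<exists>u. foldl \<delta> r u \<in> F}"
  have sR: "?s i \<in> R" for i
  proof -
    have "?s i \<in> Q" unfolding st_def by (rule foldl_in[OF Q(3) Q(2)])
    moreover obtain j where j: "j \<in> ?P" "j \<ge> i"
      using inf unfolding sel_infinite_def by (meson infinite_nat_iff_unbounded_le)
    have "?s j = foldl \<delta> (?s i) (win \<alpha> i (j - i))" using st_add[of \<delta> qs \<alpha> i "j - i"] j(2) by simp
    hence "foldl \<delta> (?s i) (win \<alpha> i (j - i)) \<in> F" using j(1) st_F by metis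
    ultimately show ?thesis unfolding R_def by blast
  qed
  define u where "u r = (SOME u. foldl \<delta> r u \<in> F)" for r
  have u: "foldl \<delta> r (u r) \<in> F" if "r \<in> R" for r
    unfolding u_def using that unfolding R_def by (auto intro: someI_ex)
  have fR: "finite R" using Q(1) unfolding R_def by simp
  define T where "T = Suc (Max (insert 0 ((\<lambda>r. length (u r)) ` R)))"
  have uT: "length (u r) < T" if "r \<in> R" for r
    unfolding T_def using that fR by (simp add: le_imp_less_Suc)
  define c0 where "c0 = Min (insert 1 ((\<lambda>r. prod_list (map p (u r))) ` R))"
  have c0: "c0 > 0" unfolding c0_def using fR prod_pos[OF pos] by auto
  have c0r: "c0 \<le> prod_list (map p (u r))" if "r \<in> R" for r
    unfolding c0_def using that fR by auto
  define H where "H q v = (if \<exists>t<T. foldl \<delta> q (take t v) \<in> F then 1 else 0::real)" for q v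
  have H01: "0 \<le> H q v \<and> H q v \<le> 1" for q v unfolding H_def by auto
  have eR: "Ew (Wd p T) (H r) \<ge> c0" if "r \<in> R" for r
  proof -
    have "c0 \<le> prod_list (map p (u r))" by (rule c0r[OF that])
    also have "\<dots> = Ew (Wd p T) (\<lambda>v. if take (length (u r)) v = u r then 1 else 0)"
      by (rule ex_prefix[OF bp, symmetric]) (use uT[OF that] in simp)
    also have "\<dots> \<le> Ew (Wd p T) (H r)"
    proof (rule integral_mono)
      show "integrable (measure_pmf (Wd p T)) (\<lambda>v. if take (length (u r)) v = u r then 1 else 0::real)"
        by (rule bint[where B=1]) simp
      show "integrable (measure_pmf (Wd p T)) (H r)" by (rule bint[where B=1]) (use H01 in \<open>auto simp: abs_le_iff\<close>)
      fix v show "(if take (length (u r)) v = u r then 1 else 0::real) \<le> H r v"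
        unfolding H_def using u[OF that] uT[OF that] by force
    qed
    finally show ?thesis .
  qed
  have KL: "(\<lambda>K. (\<Sum>i<K. H (?s i) (win \<alpha> i T) - Ew (Wd p T) (H (?s i))) / real K) \<longlonglongrightarrow> 0"
    by (rule key_lemma[OF bp hs al Q(1-3) H01])
  define C where "C K = real (card {i. i \<in> ?P \<and> i < K})" for K
  have HC: "(\<Sum>i<K. H (?s i) (win \<alpha> i T)) \<le> real T * C (K + T)" for K
  proof -
    have "H (?s i) (win \<alpha> i T) \<le> (\<Sum>t<T. if i + t \<in> ?P then 1 else 0)" for i
    proof (cases "\<exists>t<T. foldl \<delta> (?s i) (take t (win \<alpha> i T)) \<in> F")
      case True
      then obtain t where t: "t < T" "foldl \<delta> (?s i) (take t (win \<alpha> i T)) \<in> F" by blast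
      have "?s (i + t) \<in> F" using t st_add[of \<delta> qs \<alpha> i t] take_win[of t T \<alpha> i] by simp
      hence "i + t \<in> ?P" using st_F by metis
      hence "1 \<le> (\<Sum>t<T. if i + t \<in> ?P then 1 else 0::real)"
        using member_le_sum[of t "{..<T}" "\<lambda>t. if i + t \<in> ?P then 1 else 0::real"] t(1) by auto
      thus ?thesis unfolding H_def using True by simp
    next
      case False
      hence "H (?s i) (win \<alpha> i T) = 0" unfolding H_def by simp
      thus ?thesis by (simp add: sum_nonneg)
    qed
    hence "(\<Sum>i<K. H (?s i) (win \<alpha> i T)) \<le> (\<Sum>i<K. \<Sum>t<T. if i + t \<in> ?P then 1 else 0::real)"
      by (rule sum_mono)
    also have "\<dots> = (\<Sum>t<T. \<Sum>i<K. if i + t \<in> ?P then 1 else 0::real)" by (rule sum.swap)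
    also have "\<dots> \<le> (\<Sum>t<T. C (K + T))"
    proof (rule sum_mono)
      fix t assume t: "t \<in> {..<T}"
      have "(\<Sum>i<K. if i + t \<in> ?P then 1 else 0::real) = real (card {i. i < K \<and> i + t \<in> ?P})"
        by (simp add: sum.If_cases Int_def)
      also have "card {i. i < K \<and> i + t \<in> ?P} = card ((\<lambda>i. i + t) ` {i. i < K \<and> i + t \<in> ?P})"
        by (simp add: card_image)
      also have "\<dots> \<le> card {i. i \<in> ?P \<and> i < K + T}"
        by (rule card_mono) (use t in auto)
      finally show "(\<Sum>i<K. if i + t \<in> ?P then 1 else 0::real) \<le> C (K + T)" unfolding C_def by simp
    qed
    also have "\<dots> = real T * C (K + T)" by simp
    finally show ?thesis .
  qed
  have Ce: "(\<Sum>i<K. Ew (Wd p T) (H (?s i))) \<ge> c0 * real K" for K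
  proof -
    have "(\<Sum>i<K. c0) \<le> (\<Sum>i<K. Ew (Wd p T) (H (?s i)))" by (rule sum_mono) (rule eR[OF sR])
    thus ?thesis by (simp add: mult.commute)
  qed
  have CT: "C K \<ge> C (K + T) - real T" for K
  proof -
    have "{i. i \<in> ?P \<and> i < K + T} \<subseteq> {i. i \<in> ?P \<and> i < K} \<union> {K..<K+T}" by auto
    hence "card {i. i \<in> ?P \<and> i < K + T} \<le> card ({i. i \<in> ?P \<and> i < K} \<union> {K..<K+T})" by (intro card_mono) auto
    also have "\<dots> \<le> card {i. i \<in> ?P \<and> i < K} + card {K..<K+T}" by (rule card_Un_le)
    finally show ?thesis unfolding C_def by simp
  qed
  have T1: "T \<ge> 1" unfolding T_def by simp
  have ev1: "eventually (\<lambda>K. (\<Sum>i<K. H (?s i) (win \<alpha> i T) - Ew (Wd p T) (H (?s i))) / real K > - (c0/2)) sequentially"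
    using KL c0 by (intro order_tendstoD) auto
  obtain K0 :: nat where K0: "real K0 > 4 * real T * real T / c0" using reals_Archimedean2 by blast
  have "eventually (\<lambda>K. C K \<ge> c0 / (4 * real T) * real K) sequentially"
    using ev1 eventually_ge_at_top[of "Suc K0"]
  proof eventually_elim
    case (elim K)
    have Kp: "real K > 0" using elim by simp
    have "(\<Sum>i<K. H (?s i) (win \<alpha> i T)) - (\<Sum>i<K. Ew (Wd p T) (H (?s i))) > - (c0/2) * real K"
      using elim(1) Kp by (simp add: sum_subtractf field_simps)
    hence "real T * C (K + T) > c0 / 2 * real K" using HC[of K] Ce[of K] by linarith
    hence "C (K + T) > c0 / (2 * real T) * real K" using T1 by (simp add: field_simps)
    hence a: "C K > c0 / (2 * real T) * real K - real T" using CT[of K] by linarith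
    have "real K > 4 * real T * real T / c0" using K0 elim by linarith
    hence "c0 * real K > 4 * real T * real T" using c0 by (simp add: field_simps)
    hence "c0 / (4 * real T) * real K > real T" using T1 by (simp add: field_simps)
    hence "c0 / (2 * real T) * real K - real T \<ge> c0 / (4 * real T) * real K" using T1 by (simp add: field_simps)
    thus ?case using a by linarith
  qed
  moreover have "c0 / (4 * real T) > 0" using c0 T1 by simp
  ultimately show ?thesis unfolding C_def by blast
qed

lemma dfa_letter:
  assumes al: "\<And>w. w \<noteq> [] \<Longrightarrow> (\<lambda>N. real (occ w (pref \<alpha> N)) / real N) \<longlonglongrightarrow> prod_list (map p w)"
    and D: "is_dfa Q \<delta> qs F" and inf: "sel_infinite (dfa_strategy \<delta> qs F) \<alpha>"
  shows "(\<lambda>J. real (occ [a] (pref (selected (dfa_strategy \<delta> qs F) \<alpha>) J)) / real J) \<longlonglongrightarrow> p a"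
proof -
  let ?P = "sel_positions (dfa_strategy \<delta> qs F) \<alpha>"
  let ?s = "st \<delta> qs \<alpha>"
  have iP: "infinite ?P" using inf unfolding sel_infinite_def .
  have Q: "finite Q" "\<forall>q\<in>Q. \<forall>a. \<delta> q a \<in> Q" "qs \<in> Q" using D unfolding is_dfa_def by auto
  define A where "A K = real (card {i. i \<in> ?P \<and> i < K \<and> \<alpha> i = a})" for K
  define C where "C K = real (card {i. i \<in> ?P \<and> i < K})" for K
  define H where "H q v = (if q \<in> F \<and> take 1 v = [a] then 1 else 0::real)" for q v
  have H01: "0 \<le> H q v \<and> H q v \<le> 1" for q v unfolding H_def by auto
  have e: "Ew (Wd p 1) (H q) = (if q \<in> F then p a else 0)" for q
  proof (cases "q \<in> F")
    case True
    have "Ew (Wd p 1) (H q) = Ew (Wd p 1) (\<lambda>v. if take (length [a]) v = [a] then 1 else 0)"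
      unfolding H_def using True by simp
    also have "\<dots> = p a" using ex_prefix[OF bp, of "[a]" 1] by simp
    finally show ?thesis using True by simp
  next
    case False
    hence "H q = (\<lambda>v. 0)" unfolding H_def by auto
    thus ?thesis using False by simp
  qed
  have sH: "(\<Sum>i<K. H (?s i) (win \<alpha> i 1)) = A K" for K
  proof -
    have "(\<Sum>i<K. H (?s i) (win \<alpha> i 1)) = real (card {i \<in> {..<K}. ?s i \<in> F \<and> \<alpha> i = a})"
      unfolding H_def by (simp add: sum.If_cases win_def Int_def)
    also have "{i \<in> {..<K}. ?s i \<in> F \<and> \<alpha> i = a} = {i. i \<in> ?P \<and> i < K \<and> \<alpha> i = a}" using st_F by blast
    finally show ?thesis unfolding A_def .
  qed
  have sE: "(\<Sum>i<K. Ew (Wd p 1) (H (?s i))) = p a * C K" for K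
  proof -
    have "(\<Sum>i<K. Ew (Wd p 1) (H (?s i))) = (\<Sum>i<K. p a * (if ?s i \<in> F then 1 else 0))"
      unfolding e by (intro sum.cong refl) simp
    also have "\<dots> = p a * real (card {i \<in> {..<K}. ?s i \<in> F})"
      by (simp add: sum_distrib_left[symmetric] sum.If_cases Int_def)
    also have "{i \<in> {..<K}. ?s i \<in> F} = {i. i \<in> ?P \<and> i < K}" using st_F by blast
    finally show ?thesis unfolding C_def .
  qed
  have KL: "(\<lambda>K. (A K - p a * C K) / real K) \<longlonglongrightarrow> 0"
  proof -
    have "(\<lambda>K. (\<Sum>i<K. H (?s i) (win \<alpha> i 1) - Ew (Wd p 1) (H (?s i))) / real K) \<longlonglongrightarrow> 0"
      by (rule key_lemma[OF bp hs al Q H01])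
    thus ?thesis unfolding sum_subtractf sH sE .
  qed
  obtain c where c: "c > 0" "eventually (\<lambda>K. C K \<ge> c * real K) sequentially"
    using dfa_density[OF al D inf] unfolding C_def by blast
  have "(\<lambda>K. A K / C K - p a) \<longlonglongrightarrow> 0"
  proof (rule Lim_null_comparison)
    show "eventually (\<lambda>K. norm (A K / C K - p a) \<le> \<bar>(A K - p a * C K) / real K\<bar> / c) sequentially"
      using c(2) eventually_gt_at_top[of 0]
    proof eventually_elim
      case (elim K)
      have Kp: "real K > 0" using elim by simp
      have Cp: "C K > 0" using elim(1) c(1) Kp by (smt (verit) mult_pos_pos)
      have "norm (A K / C K - p a) = \<bar>(A K - p a * C K) / real K\<bar> * (real K / C K)"
        using Kp Cp by (simp add: field_simps abs_divide abs_mult)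
      also have "\<dots> \<le> \<bar>(A K - p a * C K) / real K\<bar> * (1 / c)"
      proof (rule mult_left_mono)
        show "real K / C K \<le> 1 / c" using elim(1) Kp Cp c(1) by (simp add: field_simps)
      qed simp
      finally show ?case by simp
    qed
    show "(\<lambda>K. \<bar>(A K - p a * C K) / real K\<bar> / c) \<longlonglongrightarrow> 0"
      using tendsto_divide[OF tendsto_rabs[OF KL] tendsto_const[of c]] c(1) by simp
  qed
  hence "(\<lambda>K. A K / C K) \<longlonglongrightarrow> p a" by (simp add: LIM_zero_iff)
  thus ?thesis using freq_transfer[OF iP, of \<alpha> a "p a"] unfolding A_def C_def selected_def by simp
qed

end


lemma occ_Nil: "occ [] (pref \<beta> K) = Suc K"
proof -
  have "{j. j + length [] \<le> K \<and> win \<beta> j (length []) = []} = {..K}" by (auto simp: win_def)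
  thus ?thesis unfolding occ_gen[of "[]"] by simp
qed

lemma lim_Suc_div: "(\<lambda>K. real (Suc K) / real K) \<longlonglongrightarrow> 1"
proof -
  have b0: "(\<lambda>N. 1 + 1 / real N) \<longlonglongrightarrow> 1 + 0"
    by (intro tendsto_add tendsto_const tendsto_divide_0[OF tendsto_const] filterlim_at_top_imp_at_infinity[OF filterlim_real_sequentially])
  have b1: "eventually (\<lambda>N. 1 + 1 / real N = real (Suc N) / real N) sequentially"
    using eventually_gt_at_top[of 0] by eventually_elim (simp add: field_simps)
  show ?thesis using Lim_transform_eventually[OF b0 b1] by simp
qed

context
  fixes p :: "'a::countable \<Rightarrow> real"
  assumes bp: "bernoulli_distr p" and pos: "\<forall>a. p a > 0"
    and hs: "\<And>L. L \<ge> 1 \<Longrightarrow> ((\<lambda>w. prod_list (map p w)) has_sum 1) {w. length w = L}"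
begin

lemma agafonov:
  assumes al: "\<And>w. w \<noteq> [] \<Longrightarrow> (\<lambda>N. real (occ w (pref \<alpha> N)) / real N) \<longlonglongrightarrow> prod_list (map p w)"
    and D: "is_dfa Q \<delta> qs F" and inf: "sel_infinite (dfa_strategy \<delta> qs F) \<alpha>"
  shows "(\<lambda>N. real (occ w (pref (selected (dfa_strategy \<delta> qs F) \<alpha>) N)) / real N) \<longlonglongrightarrow> prod_list (map p w)"
proof (induction w rule: rev_induct)
  case Nil
  then show ?case unfolding occ_Nil using lim_Suc_div by simp
next
  case (snoc a w)
  let ?S1 = "dfa_strategy \<delta> qs F"
  let ?\<beta> = "selected ?S1 \<alpha>"
  have iP: "infinite (sel_positions ?S1 \<alpha>)" using inf unfolding sel_infinite_def .
  have m: "prod_list (map p w) > 0" by (rule prod_pos[OF pos])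
  have inf2: "sel_infinite (postnikova w) ?\<beta>" by (rule post_infinite[OF snoc m])
  obtain Q2 \<delta>2 q2 F2 where D2: "is_dfa Q2 \<delta>2 q2 F2" "dfa_strategy \<delta>2 q2 F2 = postnikova w"
    using post_dfa by blast
  obtain Q3 \<delta>3 q3 F3 where D3: "is_dfa Q3 \<delta>3 q3 F3"
    "dfa_strategy \<delta>3 q3 F3 = {u. u \<in> ?S1 \<and> selw ?S1 u \<in> postnikova w}"
    using dfa_comp[OF D D2(1)] unfolding D2(2) by blast
  have inf3: "sel_infinite (dfa_strategy \<delta>3 q3 F3) \<alpha>"
    unfolding D3(2) comp_sel_inf[OF iP] by (rule inf2)
  have eq: "selected (dfa_strategy \<delta>3 q3 F3) \<alpha> = selected (postnikova w) ?\<beta>"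
    unfolding D3(2) by (rule comp_selected[OF iP inf2])
  have fr: "(\<lambda>J. real (occ [a] (pref (selected (postnikova w) ?\<beta>) J)) / real J) \<longlonglongrightarrow> p a"
    using dfa_letter[OF bp pos hs al D3(1) inf3, of a] unfolding eq .
  show ?case using post_freq[OF snoc inf2 fr] by simp
qed

end


lemma occ_perturb:
  "real (occ w (pref \<alpha> N)) \<le> real (occ w (pref \<alpha>' N)) + real (length w) * real (card {i. i < N \<and> \<alpha>' i \<noteq> \<alpha> i})"
proof -
  let ?L = "length w"
  define Dn where "Dn = {i. i < N \<and> \<alpha>' i \<noteq> \<alpha> i}"
  have fD: "finite Dn" unfolding Dn_def by simp
  have sub: "{j. j + ?L \<le> N \<and> win \<alpha> j ?L = w} \<subseteq> {j. j + ?L \<le> N \<and> win \<alpha>' j ?L = w} \<union> (\<Union>t\<in>{..<?L}. {j. j + t \<in> Dn})"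
  proof
    fix j assume j: "j \<in> {j. j + ?L \<le> N \<and> win \<alpha> j ?L = w}"
    show "j \<in> {j. j + ?L \<le> N \<and> win \<alpha>' j ?L = w} \<union> (\<Union>t\<in>{..<?L}. {j. j + t \<in> Dn})"
    proof (cases "win \<alpha>' j ?L = w")
      case True then show ?thesis using j by auto
    next
      case False
      hence "win \<alpha>' j ?L \<noteq> win \<alpha> j ?L" using j by simp
      have "\<exists>t<?L. \<alpha>' (j + t) \<noteq> \<alpha> (j + t)"
      proof (rule ccontr)
        assume "\<not> (\<exists>t<?L. \<alpha>' (j + t) \<noteq> \<alpha> (j + t))"
        hence h: "\<And>t. t < ?L \<Longrightarrow> \<alpha>' (j + t) = \<alpha> (j + t)" by auto
        have "win \<alpha>' j ?L = win \<alpha> j ?L" unfolding win_def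
        proof (rule map_cong[OF refl])
          fix x assume "x \<in> set [j..<j + ?L]"
          hence "x = j + (x - j)" "x - j < ?L" by auto
          thus "\<alpha>' x = \<alpha> x" using h by metis
        qed
        thus False using \<open>win \<alpha>' j ?L \<noteq> win \<alpha> j ?L\<close> by simp
      qed
      then obtain t where t: "t < ?L" "\<alpha>' (j + t) \<noteq> \<alpha> (j + t)" by blast
      hence "j + t \<in> Dn" using j unfolding Dn_def by auto
      thus ?thesis using t(1) by blast
    qed
  qed
  have fin2: "finite {j. j + t \<in> Dn}" for t
    by (rule finite_subset[of _ "{..<N}"]) (auto simp: Dn_def)
  have c2: "card {j. j + t \<in> Dn} \<le> card Dn" for t
  proof -
    have "card {j. j + t \<in> Dn} = card ((\<lambda>j. j + t) ` {j. j + t \<in> Dn})" by (simp add: card_image)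
    also have "\<dots> \<le> card Dn" by (rule card_mono[OF fD]) auto
    finally show ?thesis .
  qed
  have "card {j. j + ?L \<le> N \<and> win \<alpha> j ?L = w} \<le> card ({j. j + ?L \<le> N \<and> win \<alpha>' j ?L = w} \<union> (\<Union>t\<in>{..<?L}. {j. j + t \<in> Dn}))"
  proof (rule card_mono[OF _ sub])
    have "finite {j. j + ?L \<le> N \<and> win \<alpha>' j ?L = w}" by (rule finite_subset[of _ "{..N}"]) auto
    moreover have "finite (\<Union>t\<in>{..<?L}. {j. j + t \<in> Dn})" using fin2 by simp
    ultimately show "finite ({j. j + ?L \<le> N \<and> win \<alpha>' j ?L = w} \<union> (\<Union>t\<in>{..<?L}. {j. j + t \<in> Dn}))" by simp
  qed
  also have "\<dots> \<le> card {j. j + ?L \<le> N \<and> win \<alpha>' j ?L = w} + card (\<Union>t\<in>{..<?L}. {j. j + t \<in> Dn})"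
    by (rule card_Un_le)
  also have "card (\<Union>t\<in>{..<?L}. {j. j + t \<in> Dn}) \<le> (\<Sum>t<?L. card {j. j + t \<in> Dn})"
    by (rule card_UN_le) simp
  also have "\<dots> \<le> (\<Sum>t<?L. card Dn)" by (rule sum_mono) (rule c2)
  finally have "card {j. j + ?L \<le> N \<and> win \<alpha> j ?L = w} \<le> card {j. j + ?L \<le> N \<and> win \<alpha>' j ?L = w} + ?L * card Dn"
    by simp
  hence "occ w (pref \<alpha> N) \<le> occ w (pref \<alpha>' N) + ?L * card Dn" unfolding occ_gen .
  hence "real (occ w (pref \<alpha> N)) \<le> real (occ w (pref \<alpha>' N) + ?L * card Dn)" by linarith
  thus ?thesis unfolding Dn_def by simp
qed

lemma perturb_lim:
  assumes lim: "(\<lambda>N. real (occ w (pref \<alpha> N)) / real N) \<longlonglongrightarrow> m"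
    and d: "(\<lambda>N. real (card {i. i < N \<and> \<alpha>' i \<noteq> \<alpha> i}) / real N) \<longlonglongrightarrow> 0"
  shows "(\<lambda>N. real (occ w (pref \<alpha>' N)) / real N) \<longlonglongrightarrow> m"
proof -
  define dn where "dn N = real (card {i. i < N \<and> \<alpha>' i \<noteq> \<alpha> i})" for N
  have sym: "{i. i < N \<and> \<alpha> i \<noteq> \<alpha>' i} = {i. i < N \<and> \<alpha>' i \<noteq> \<alpha> i}" for N by auto
  have b: "\<bar>real (occ w (pref \<alpha>' N)) - real (occ w (pref \<alpha> N))\<bar> \<le> real (length w) * dn N" for N
    using occ_perturb[of w \<alpha> N \<alpha>'] occ_perturb[of w \<alpha>' N \<alpha>] unfolding dn_def sym by linarith
  have "(\<lambda>N. real (occ w (pref \<alpha>' N)) / real N - real (occ w (pref \<alpha> N)) / real N) \<longlonglongrightarrow> 0"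
  proof (rule Lim_null_comparison)
    show "eventually (\<lambda>N. norm (real (occ w (pref \<alpha>' N)) / real N - real (occ w (pref \<alpha> N)) / real N) \<le> real (length w) * (dn N / real N)) sequentially"
    proof (intro always_eventually allI)
      fix N
      have "norm (real (occ w (pref \<alpha>' N)) / real N - real (occ w (pref \<alpha> N)) / real N)
          = \<bar>real (occ w (pref \<alpha>' N)) - real (occ w (pref \<alpha> N))\<bar> / real N"
        by (simp add: diff_divide_distrib[symmetric] abs_divide)
      also have "\<dots> \<le> real (length w) * dn N / real N" using b[of N] by (simp add: divide_right_mono)
      finally show "norm (real (occ w (pref \<alpha>' N)) / real N - real (occ w (pref \<alpha> N)) / real N) \<le> real (length w) * (dn N / real N)"
        by simp
    qed
    show "(\<lambda>N. real (length w) * (dn N / real N)) \<longlonglongrightarrow> 0"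
      using tendsto_mult[OF tendsto_const d, of "real (length w)"] unfolding dn_def by simp
  qed
  from tendsto_add[OF this lim] show ?thesis by simp
qed

definition Esq :: "nat set" where "Esq = {k*k | k. k \<ge> 2}"
definition Psq :: "nat set" where "Psq = Esq \<union> (\<lambda>e. e + 1) ` Esq"

lemma Esq_count: "real (card {i. i < N \<and> i \<in> Esq}) \<le> sqrt (real N) + 1"
proof -
  define s where "s = nat \<lceil>sqrt (real N)\<rceil>"
  have "{i. i < N \<and> i \<in> Esq} \<subseteq> (\<lambda>k. k*k) ` {..<s}"
  proof
    fix i assume "i \<in> {i. i < N \<and> i \<in> Esq}"
    then obtain k where k: "i = k*k" "k*k < N" unfolding Esq_def by auto
    have "real k ^ 2 < real N" using k(2) by (simp add: power2_eq_square flip: of_nat_mult)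
    hence "real k < sqrt (real N)" by (rule real_less_rsqrt)
    hence "k < s" unfolding s_def by linarith
    thus "i \<in> (\<lambda>k. k*k) ` {..<s}" using k(1) by auto
  qed
  hence "card {i. i < N \<and> i \<in> Esq} \<le> card ((\<lambda>k. k*k) ` {..<s})" by (rule card_mono[rotated]) simp
  also have "\<dots> \<le> s" using card_image_le[of "{..<s}" "\<lambda>k. k*k"] by simp
  finally have "real (card {i. i < N \<and> i \<in> Esq}) \<le> real s" by simp
  also have "real s \<le> sqrt (real N) + 1"
  proof -
    have "real s = of_int \<lceil>sqrt (real N)\<rceil>" unfolding s_def by simp
    thus ?thesis using of_int_ceiling_le_add_one[of "sqrt (real N)"] by linarith
  qed
  finally show ?thesis .
qed

lemma Psq_count: "real (card {i. i < N \<and> i \<in> Psq}) \<le> 2 * (sqrt (real N) + 1)"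
proof -
  have "{i. i < N \<and> i \<in> Psq} \<subseteq> {i. i < N \<and> i \<in> Esq} \<union> (\<lambda>e. e + 1) ` {i. i < N \<and> i \<in> Esq}"
    unfolding Psq_def by auto
  hence "card {i. i < N \<and> i \<in> Psq} \<le> card ({i. i < N \<and> i \<in> Esq} \<union> (\<lambda>e. e + 1) ` {i. i < N \<and> i \<in> Esq})"
    by (rule card_mono[rotated]) simp
  also have "\<dots> \<le> card {i. i < N \<and> i \<in> Esq} + card ((\<lambda>e. e + 1) ` {i. i < N \<and> i \<in> Esq})" by (rule card_Un_le)
  also have "\<dots> \<le> 2 * card {i. i < N \<and> i \<in> Esq}" using card_image_le[of "{i. i < N \<and> i \<in> Esq}" "\<lambda>e. e + 1"] by simp
  finally show ?thesis using Esq_count[of N] by simp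
qed

lemma Psq_dens: "(\<lambda>N. real (card {i. i < N \<and> i \<in> Psq}) / real N) \<longlonglongrightarrow> 0"
proof (rule Lim_null_comparison)
  show "eventually (\<lambda>N. norm (real (card {i. i < N \<and> i \<in> Psq}) / real N) \<le> 2 / sqrt (real N) + 2 / real N) sequentially"
    using eventually_gt_at_top[of 0]
  proof eventually_elim
    case (elim N)
    have Np: "real N > 0" using elim by simp
    have "norm (real (card {i. i < N \<and> i \<in> Psq}) / real N) \<le> 2 * (sqrt (real N) + 1) / real N"
      using Psq_count[of N] Np by (simp add: divide_right_mono)
    also have "\<dots> = 2 / sqrt (real N) + 2 / real N"
    proof -
      have "sqrt (real N) * sqrt (real N) = real N" using Np by simp
      thus ?thesis using Np by (simp add: field_simps)
    qed
    finally show ?case .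
  qed
  have s: "filterlim (\<lambda>N. sqrt (real N)) at_top sequentially"
    by (rule filterlim_compose[OF sqrt_at_top filterlim_real_sequentially])
  show "(\<lambda>N. 2 / sqrt (real N) + 2 / real N) \<longlonglongrightarrow> 0"
    using tendsto_add[OF tendsto_divide_0[OF tendsto_const filterlim_at_top_imp_at_infinity[OF s]]
                         tendsto_divide_0[OF tendsto_const filterlim_at_top_imp_at_infinity[OF filterlim_real_sequentially]], of 2 2]
    by simp
qed


lemma Psq_le: "card {i. i < N \<and> i \<in> Psq} \<le> 2 * card {i. i < N \<and> i \<in> Esq}"
proof -
  have "{i. i < N \<and> i \<in> Psq} \<subseteq> {i. i < N \<and> i \<in> Esq} \<union> (\<lambda>e. e + 1) ` {i. i < N \<and> i \<in> Esq}"
    unfolding Psq_def by auto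
  hence "card {i. i < N \<and> i \<in> Psq} \<le> card ({i. i < N \<and> i \<in> Esq} \<union> (\<lambda>e. e + 1) ` {i. i < N \<and> i \<in> Esq})"
    by (rule card_mono[rotated]) simp
  also have "\<dots> \<le> card {i. i < N \<and> i \<in> Esq} + card ((\<lambda>e. e + 1) ` {i. i < N \<and> i \<in> Esq})" by (rule card_Un_le)
  also have "\<dots> \<le> 2 * card {i. i < N \<and> i \<in> Esq}" using card_image_le[of "{i. i < N \<and> i \<in> Esq}" "\<lambda>e. e + 1"] by simp
  finally show ?thesis .
qed

lemma occ_snoc_le: "occ (w@[a]) v \<le> occ w v"
  unfolding occ_def
proof (rule card_mono)
  show "finite {j. j + length w \<le> length v \<and> take (length w) (drop j v) = w}"
    by (rule finite_subset[of _ "{..length v}"]) auto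
  show "{j. j + length (w @ [a]) \<le> length v \<and> take (length (w @ [a])) (drop j v) = w @ [a]}
        \<subseteq> {j. j + length w \<le> length v \<and> take (length w) (drop j v) = w}"
  proof
    fix j assume "j \<in> {j. j + length (w @ [a]) \<le> length v \<and> take (length (w @ [a])) (drop j v) = w @ [a]}"
    hence h: "j + length w + 1 \<le> length v" "take (length w + 1) (drop j v) = w @ [a]" by auto
    have "take (length w) (drop j v) = take (length w) (take (length w + 1) (drop j v))" by simp
    also have "\<dots> = w" unfolding h(2) by simp
    finally show "j \<in> {j. j + length w \<le> length v \<and> take (length w) (drop j v) = w}" using h(1) by simp
  qed
qed

lemma Esq_inf: "infinite Esq"
proof -
  have "Esq = (\<lambda>k. k*k) ` {2..}" unfolding Esq_def by auto
  moreover have "strict_mono (\<lambda>k::nat. k*k)" by (rule strict_monoI) (simp add: mult_strict_mono)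
  hence "inj_on (\<lambda>k::nat. k*k) {2..}" using strict_mono_imp_inj_on inj_on_subset by blast
  ultimately show ?thesis using finite_image_iff infinite_Ici by metis
qed

lemma post_imp_bern:
  fixes \<mu> :: "'a::countable list \<Rightarrow> real"
  assumes pm: "prob_map \<mu>" and ex: "mu_distributed \<mu> \<alpha>0"
    and post: "\<forall>w \<alpha>. mu_distributed \<mu> \<alpha> \<and> sel_infinite (postnikova w) \<alpha> \<longrightarrow> mu_distributed \<mu> (selected (postnikova w) \<alpha>)"
  shows "\<exists>p. bernoulli_distr p \<and> (\<forall>a. p a > 0) \<and> induced_by \<mu> p"
proof -
  define p where "p a = \<mu> [a]" for a
  have mu0: "\<mu> [] = 1" and mnn: "\<And>w. w \<noteq> [] \<Longrightarrow> 0 \<le> \<mu> w"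
    and lev: "\<And>n. n \<ge> 1 \<Longrightarrow> (\<mu> has_sum 1) {w. length w = n}"
    using pm unfolding prob_map_def by auto
  have al: "\<And>w. w \<noteq> [] \<Longrightarrow> (\<lambda>N. real (occ w (pref \<alpha>0 N)) / real N) \<longlonglongrightarrow> \<mu> w"
    using ex unfolding mu_distributed_def by auto
  have bp: "bernoulli_distr p"
  proof -
    have e: "{w. length w = (1::nat)} = (\<lambda>a. [a]) ` UNIV" by (auto simp: length_Suc_conv)
    have "(\<mu> has_sum 1) ((\<lambda>a. [a]) ` UNIV)" using lev[of 1] unfolding e by simp
    hence "((\<mu> \<circ> (\<lambda>a. [a])) has_sum 1) UNIV" by (subst (asm) has_sum_reindex) (auto simp: inj_on_def)
    thus ?thesis unfolding bernoulli_distr_def p_def by (auto simp: o_def mnn)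
  qed
  have mult: "\<mu> (w@[a]) = \<mu> w * p a" if "w \<noteq> []" for w a
  proof (cases "\<mu> w = 0")
    case True
    have "\<mu> (w@[a]) \<le> \<mu> w"
    proof (rule tendsto_le[OF _ al[OF that] al])
      show "eventually (\<lambda>N. real (occ (w@[a]) (pref \<alpha>0 N)) / real N \<le> real (occ w (pref \<alpha>0 N)) / real N) sequentially"
        using occ_snoc_le[of w a] by (intro always_eventually allI divide_right_mono) auto
    qed simp_all
    moreover have "0 \<le> \<mu> (w@[a])" by (rule mnn) simp
    ultimately show ?thesis using True by simp
  next
    case False
    hence m: "\<mu> w > 0" using mnn[OF that] by simp
    have inf: "sel_infinite (postnikova w) \<alpha>0" by (rule post_infinite[OF al[OF that] m])
    have "mu_distributed \<mu> (selected (postnikova w) \<alpha>0)" using post ex inf by blast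
    hence fr: "(\<lambda>J. real (occ [a] (pref (selected (postnikova w) \<alpha>0) J)) / real J) \<longlonglongrightarrow> p a"
      unfolding mu_distributed_def p_def by auto
    have "(\<lambda>K. real (occ (w@[a]) (pref \<alpha>0 K)) / real K) \<longlonglongrightarrow> \<mu> w * p a"
      by (rule post_freq[OF al[OF that] inf fr])
    moreover have "(\<lambda>K. real (occ (w@[a]) (pref \<alpha>0 K)) / real K) \<longlonglongrightarrow> \<mu> (w@[a])" by (rule al) simp
    ultimately show ?thesis using LIMSEQ_unique by blast
  qed
  have ind: "induced_by \<mu> p"
    unfolding induced_by_def
  proof (intro allI impI)
    fix w :: "'a list" assume "w \<noteq> []"
    thus "\<mu> w = prod_list (map p w)"
    proof (induction w rule: rev_induct)
      case Nil then show ?case by simp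
    next
      case (snoc a w)
      show ?case
      proof (cases "w = []")
        case True then show ?thesis by (simp add: p_def)
      next
        case False
        then show ?thesis using snoc.IH mult[OF False] by simp
      qed
    qed
  qed
  have pos: "p b > 0" for b
  proof (rule ccontr)
    assume "\<not> p b > 0"
    moreover have "p b \<ge> 0" using bp unfolding bernoulli_distr_def by auto
    ultimately have pb: "p b = 0" by simp
    have "\<exists>c. c \<noteq> b"
    proof (rule ccontr)
      assume "\<not> (\<exists>c. c \<noteq> b)"
      hence U: "UNIV = {b}" by auto
      have "(p has_sum 1) {b}" using bp unfolding bernoulli_distr_def U[symmetric] by simp
      moreover have "(p has_sum p b) {b}" by (rule has_sum_finite[of "{b}" p, simplified])
      ultimately have "p b = 1" using has_sum_unique by blast
      thus False using pb by simp
    qed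
    then obtain c where c: "c \<noteq> b" by blast
    define \<alpha>' where "\<alpha>' i = (if i \<in> Psq then b else if \<alpha>0 i = b then c else \<alpha>0 i)" for i
    have ab: "\<alpha>' i = b \<longleftrightarrow> i \<in> Psq" for i unfolding \<alpha>'_def using c by auto
    have d: "(\<lambda>N. real (card {i. i < N \<and> \<alpha>' i \<noteq> \<alpha>0 i}) / real N) \<longlonglongrightarrow> 0"
    proof (rule tendsto_sandwich[of "\<lambda>_. 0" _ _ "\<lambda>N. real (card {i. i < N \<and> i \<in> Psq}) / real N + real (occ [b] (pref \<alpha>0 N)) / real N"])
      show "eventually (\<lambda>N. 0 \<le> real (card {i. i < N \<and> \<alpha>' i \<noteq> \<alpha>0 i}) / real N) sequentially" by simp
      show "eventually (\<lambda>N. real (card {i. i < N \<and> \<alpha>' i \<noteq> \<alpha>0 i}) / real N \<le> real (card {i. i < N \<and> i \<in> Psq}) / real N + real (occ [b] (pref \<alpha>0 N)) / real N) sequentially"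
      proof (intro always_eventually allI)
        fix N
        have "{i. i < N \<and> \<alpha>' i \<noteq> \<alpha>0 i} \<subseteq> {i. i < N \<and> i \<in> Psq} \<union> {k. k < N \<and> \<alpha>0 k = b}"
          unfolding \<alpha>'_def by auto
        hence "card {i. i < N \<and> \<alpha>' i \<noteq> \<alpha>0 i} \<le> card ({i. i < N \<and> i \<in> Psq} \<union> {k. k < N \<and> \<alpha>0 k = b})"
          by (rule card_mono[rotated]) simp
        also have "\<dots> \<le> card {i. i < N \<and> i \<in> Psq} + card {k. k < N \<and> \<alpha>0 k = b}" by (rule card_Un_le)
        finally have "real (card {i. i < N \<and> \<alpha>' i \<noteq> \<alpha>0 i}) \<le> real (card {i. i < N \<and> i \<in> Psq}) + real (occ [b] (pref \<alpha>0 N))"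
          unfolding occ_single by linarith
        thus "real (card {i. i < N \<and> \<alpha>' i \<noteq> \<alpha>0 i}) / real N \<le> real (card {i. i < N \<and> i \<in> Psq}) / real N + real (occ [b] (pref \<alpha>0 N)) / real N"
          by (simp add: add_divide_distrib[symmetric] divide_right_mono)
      qed
      have "(\<lambda>N. real (occ [b] (pref \<alpha>0 N)) / real N) \<longlonglongrightarrow> 0" using al[of "[b]"] pb unfolding p_def by simp
      thus "(\<lambda>N. real (card {i. i < N \<and> i \<in> Psq}) / real N + real (occ [b] (pref \<alpha>0 N)) / real N) \<longlonglongrightarrow> 0"
        using tendsto_add[OF Psq_dens] by simp
    qed simp
    have md: "mu_distributed \<mu> \<alpha>'"
      unfolding mu_distributed_def using perturb_lim[OF al d] by blast
    let ?P = "sel_positions (postnikova [b]) \<alpha>'"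
    have Pb: "i \<in> ?P \<longleftrightarrow> 1 \<le> i \<and> i - 1 \<in> Psq" for i
      unfolding post_pos by (auto simp: win_def ab[symmetric])
    have "(\<lambda>e. e + 1) ` Esq \<subseteq> ?P" by (auto simp: Pb Psq_def)
    moreover have "infinite ((\<lambda>e. e + 1) ` Esq)" using Esq_inf by (simp add: finite_image_iff)
    ultimately have iP: "infinite ?P" using finite_subset by blast
    hence inf: "sel_infinite (postnikova [b]) \<alpha>'" unfolding sel_infinite_def .
    have "mu_distributed \<mu> (selected (postnikova [b]) \<alpha>')" using post md inf by blast
    hence "(\<lambda>J. real (occ [b] (pref (selected (postnikova [b]) \<alpha>') J)) / real J) \<longlonglongrightarrow> 0"
      unfolding mu_distributed_def using pb unfolding p_def by (metis list.distinct(1))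
    hence AC: "(\<lambda>K. real (card {i. i \<in> ?P \<and> i < K \<and> \<alpha>' i = b}) / real (card {i. i \<in> ?P \<and> i < K})) \<longlonglongrightarrow> 0"
      using freq_transfer[OF iP, of \<alpha>' b 0] unfolding selected_def by simp
    have lb: "eventually (\<lambda>K. real (card {i. i \<in> ?P \<and> i < K \<and> \<alpha>' i = b}) / real (card {i. i \<in> ?P \<and> i < K}) \<ge> 1/4) sequentially"
      using eventually_ge_at_top[of 6]
    proof eventually_elim
      case (elim K)
      define aK where "aK = card {e. e \<in> Esq \<and> e + 1 < K}"
      have fin1: "finite {e. e \<in> Esq \<and> e + 1 < K}" by (rule finite_subset[of _ "{..<K}"]) auto
      have A: "aK \<le> card {i. i \<in> ?P \<and> i < K \<and> \<alpha>' i = b}"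
      proof -
        have "aK = card ((\<lambda>e. e + 1) ` {e. e \<in> Esq \<and> e + 1 < K})" unfolding aK_def by (simp add: card_image)
        also have "\<dots> \<le> card {i. i \<in> ?P \<and> i < K \<and> \<alpha>' i = b}"
          by (rule card_mono) (auto simp: Pb ab Psq_def)
        finally show ?thesis .
      qed
      have a1: "aK \<ge> 1"
      proof -
        have "4 \<in> {e. e \<in> Esq \<and> e + 1 < K}" using elim unfolding Esq_def by (auto intro: exI[of _ 2])
        hence "{e. e \<in> Esq \<and> e + 1 < K} \<noteq> {}" by blast
        thus ?thesis unfolding aK_def using fin1 by (simp add: Suc_le_eq card_gt_0_iff)
      qed
      have E: "card {e. e < K \<and> e \<in> Esq} \<le> aK + 1"
      proof -
        have "{e. e < K \<and> e \<in> Esq} \<subseteq> insert (K - 1) {e. e \<in> Esq \<and> e + 1 < K}" by auto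
        hence "card {e. e < K \<and> e \<in> Esq} \<le> card (insert (K - 1) {e. e \<in> Esq \<and> e + 1 < K})"
          by (rule card_mono[rotated]) (use fin1 in simp)
        also have "\<dots> \<le> aK + 1" unfolding aK_def using fin1 by (simp add: card_insert_if)
        finally show ?thesis .
      qed
      have C: "card {i. i \<in> ?P \<and> i < K} \<le> card {j. j < K \<and> j \<in> Psq}"
      proof -
        have "{i. i \<in> ?P \<and> i < K} \<subseteq> (\<lambda>j. j + 1) ` {j. j < K \<and> j \<in> Psq}"
        proof
          fix i assume "i \<in> {i. i \<in> ?P \<and> i < K}"
          hence "1 \<le> i" "i - 1 \<in> Psq" "i < K" using Pb by auto
          thus "i \<in> (\<lambda>j. j + 1) ` {j. j < K \<and> j \<in> Psq}" by (intro image_eqI[of _ _ "i - 1"]) auto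
        qed
        hence "card {i. i \<in> ?P \<and> i < K} \<le> card ((\<lambda>j. j + 1) ` {j. j < K \<and> j \<in> Psq})"
          by (rule card_mono[rotated]) simp
        also have "\<dots> \<le> card {j. j < K \<and> j \<in> Psq}" by (rule card_image_le) simp
        finally show ?thesis .
      qed
      have C4: "card {i. i \<in> ?P \<and> i < K} \<le> 4 * card {i. i \<in> ?P \<and> i < K \<and> \<alpha>' i = b}"
        using C Psq_le[of K] E A a1 by linarith
      have Cp: "card {i. i \<in> ?P \<and> i < K} > 0"
      proof -
        have "card {i. i \<in> ?P \<and> i < K \<and> \<alpha>' i = b} \<le> card {i. i \<in> ?P \<and> i < K}" by (rule card_mono) auto
        thus ?thesis using A a1 by linarith
      qed
      show ?case using C4 Cp by (simp add: field_simps)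
    qed
    have "eventually (\<lambda>K. real (card {i. i \<in> ?P \<and> i < K \<and> \<alpha>' i = b}) / real (card {i. i \<in> ?P \<and> i < K}) < 1/4) sequentially"
      using AC by (intro order_tendstoD) auto
    with lb have "eventually (\<lambda>K. False) sequentially" by eventually_elim simp
    thus False by simp
  qed
  show ?thesis using bp pos ind by blast
qed


theorem theorem3p1:
  fixes \<mu> :: "'a::countable list \<Rightarrow> real"
  assumes "prob_map \<mu>"
    and "\<exists>\<alpha>. mu_distributed \<mu> \<alpha>"
  shows "((\<exists>p. bernoulli_distr p \<and> (\<forall>a. p a > 0) \<and> induced_by \<mu> p)
          \<longleftrightarrow> (\<forall>w \<alpha>. mu_distributed \<mu> \<alpha> \<and> sel_infinite (postnikova w) \<alpha>
                   \<longrightarrow> mu_distributed \<mu> (selected (postnikova w) \<alpha>)))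
       \<and> ((\<forall>w \<alpha>. mu_distributed \<mu> \<alpha> \<and> sel_infinite (postnikova w) \<alpha>
                   \<longrightarrow> mu_distributed \<mu> (selected (postnikova w) \<alpha>))
          \<longleftrightarrow> (\<forall>Q \<delta> qs F \<alpha>. is_dfa Q \<delta> qs F \<and> mu_distributed \<mu> \<alpha>
                   \<and> sel_infinite (dfa_strategy \<delta> qs F) \<alpha>
                   \<longrightarrow> mu_distributed \<mu> (selected (dfa_strategy \<delta> qs F) \<alpha>)))"
proof -
  define B where "B = (\<exists>p. bernoulli_distr p \<and> (\<forall>a. p a > 0) \<and> induced_by \<mu> p)"
  define Po where "Po = (\<forall>w \<alpha>. mu_distributed \<mu> \<alpha> \<and> sel_infinite (postnikova w) \<alpha>
                   \<longrightarrow> mu_distributed \<mu> (selected (postnikova w) \<alpha>))"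
  define Ag where "Ag = (\<forall>Q \<delta> qs F \<alpha>. is_dfa Q \<delta> qs F \<and> mu_distributed \<mu> \<alpha>
                   \<and> sel_infinite (dfa_strategy \<delta> qs F) \<alpha>
                   \<longrightarrow> mu_distributed \<mu> (selected (dfa_strategy \<delta> qs F) \<alpha>))"
  have BAg: "Ag" if "B"
  proof -
    obtain p where p: "bernoulli_distr p" "\<forall>a. p a > 0" "induced_by \<mu> p" using \<open>B\<close> unfolding B_def by blast
    have mp: "\<mu> w = prod_list (map p w)" if "w \<noteq> []" for w using p(3) that unfolding induced_by_def by auto
    have hs: "((\<lambda>w. prod_list (map p w)) has_sum 1) {w. length w = L}" if "L \<ge> 1" for L
    proof -
      have "(\<mu> has_sum 1) {w. length w = L}" using assms(1) that unfolding prob_map_def by auto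
      moreover have "\<And>w. w \<in> {w. length w = L} \<Longrightarrow> \<mu> w = prod_list (map p w)"
      proof -
        fix w :: "'a list" assume "w \<in> {w. length w = L}"
        hence "w \<noteq> []" using that by auto
        thus "\<mu> w = prod_list (map p w)" by (rule mp)
      qed
      ultimately show ?thesis using has_sum_cong[of "{w. length w = L}" \<mu> "\<lambda>w. prod_list (map p w)" 1] by simp
    qed
    show ?thesis unfolding Ag_def
    proof (intro allI impI)
      fix Q \<delta> qs F \<alpha> assume h: "is_dfa Q \<delta> qs F \<and> mu_distributed \<mu> \<alpha> \<and> sel_infinite (dfa_strategy \<delta> qs F) \<alpha>"
      have al: "(\<lambda>N. real (occ w (pref \<alpha> N)) / real N) \<longlonglongrightarrow> prod_list (map p w)" if "w \<noteq> []" for w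
      proof -
        have "(\<lambda>N. real (occ w (pref \<alpha> N)) / real N) \<longlonglongrightarrow> \<mu> w" using h that unfolding mu_distributed_def by blast
        thus ?thesis unfolding mp[OF that] .
      qed
      have D: "is_dfa Q \<delta> qs F" and I: "sel_infinite (dfa_strategy \<delta> qs F) \<alpha>" using h by auto
      show "mu_distributed \<mu> (selected (dfa_strategy \<delta> qs F) \<alpha>)"
        unfolding mu_distributed_def
      proof (intro allI impI)
        fix w :: "'a list" assume w: "w \<noteq> []"
        show "(\<lambda>N. real (occ w (pref (selected (dfa_strategy \<delta> qs F) \<alpha>) N)) / real N) \<longlonglongrightarrow> \<mu> w"
          unfolding mp[OF w] by (rule agafonov[OF p(1) p(2) hs al D I])
      qed
    qed
  qed
  have AgPo: "Po" if "Ag"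
    unfolding Po_def
  proof (intro allI impI)
    fix w \<alpha> assume h: "mu_distributed \<mu> \<alpha> \<and> sel_infinite (postnikova w) \<alpha>"
    obtain Q \<delta> qs F where D: "is_dfa Q \<delta> qs F" "dfa_strategy \<delta> qs F = postnikova w" using post_dfa by blast
    have "is_dfa Q \<delta> qs F \<and> mu_distributed \<mu> \<alpha> \<and> sel_infinite (dfa_strategy \<delta> qs F) \<alpha>
        \<longrightarrow> mu_distributed \<mu> (selected (dfa_strategy \<delta> qs F) \<alpha>)"
      using \<open>Ag\<close> unfolding Ag_def by blast
    thus "mu_distributed \<mu> (selected (postnikova w) \<alpha>)" using D h by simp
  qed
  have PoB: "B" if "Po"
  proof -
    obtain \<alpha>0 where "mu_distributed \<mu> \<alpha>0" using assms(2) by blast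
    thus ?thesis unfolding B_def by (rule post_imp_bern[OF assms(1)]) (use \<open>Po\<close> in \<open>simp add: Po_def\<close>)
  qed
  have "(B \<longleftrightarrow> Po) \<and> (Po \<longleftrightarrow> Ag)" using BAg AgPo PoB by blast
  thus ?thesis unfolding B_def Po_def Ag_def .
qed


end
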